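(* Let $\lambda$ be a partition and $n\ge|\lambda|+\lambda_1$. The map $\Phi=\Phi^{(n)}_\lambda:V_{\lambda^{(n+1)}}\to V_{\lambda^{(n)}}$ satisfies: (1) $\Phi T_i=T_i\Phi$ for $1\le i\le n-1$; (2) $\Phi X_i=X_i\Phi$ for $1\le i\le n$; (3) $\Phi X_{n+1}=0$; (4) $\Phi\, t^{-n}\pi_{n+1}T_n=t^{-(n-1)}\pi_n\Phi$; (5) $\Phi\theta_i^{(n+1)}=\theta_i^{(n)}\Phi$ for $1\le i\le n$; (6) $\Phi(\theta^{(n+1)}_{n+1}-t^{n-|\lambda|})=0$. Here $\theta^{(m)}_i,\pi_m$ denote the elements of $\mathcal{D}_m$ acting on $V_{\lambda^{(m)}}$.
   Context: All algebras over $\mathbb{Q}(q,t)$. $\mathcal{H}_m$: $T_1,\dots,T_{m-1}$, $(T_i-1)(T_i+t)=0$, braid relations. $\mathcal{A}_m$: $\mathcal{H}_m$ plus commuting invertible $\theta_1,\dots,\theta_m$ with $\theta_{i+1}=tT_i^{-1}\theta_iT_i^{-1}$, $T_i\theta_j=\theta_jT_i$ ($j\notin\{i,i+1\}$); $\pi_m=t^{m-1}\theta_1T_1^{-1}\cdots T_{m-1}^{-1}$. $\mathcal{D}_m$: $\mathcal{A}_m$ plus commuting $X_1,\dots,X_m$ with $X_{i+1}=tT_i^{-1}X_iT_i^{-1}$, $T_iX_j=X_jT_i$ ($j\notin\{i,i+1\}$), $\pi_mX_i\pi_m^{-1}=X_{i+1}$ ($i<m$), $\pi_mX_m\pi_m^{-1}=qX_1$.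 English notation; content $c(\square)=b-a$ for row $a$, column $b$. For a partition $\nu$ with $|\nu|=m$, $S_\nu$ is the irreducible $\mathcal{H}_m$-module with basis $e_\tau$ ($\tau$ standard Young tableau of shape $\nu$), $\bar\theta_ie_\tau=t^{c_\tau(i)}e_\tau$ ($c_\tau(i)$ content of the box labelled $i$; $\bar\theta_1=1$, $\bar\theta_{i+1}=tT_i^{-1}\bar\theta_iT_i^{-1}$), $(tT_i^{-1}\bar\theta_i-\bar\theta_itT_i^{-1})e_\tau=(t^{c_\tau(i)}-t^{c_\tau(i+1)})e_{s_i\tau}$ when $s_i\tau$ (swap of $i,i+1$) is standard and $c_\tau(i)-c_\tau(i+1)>1$, $T_ie_\tau=e_\tau$ / $-te_\tau$ for $i,i+1$ in same row / column. It is an $\mathcal{A}_m$-module via $T_i\mapsto T_i$, $\theta_1\mapsto1$, and $V_\nu=\mathcal{D}_m\otimes_{\mathcal{A}_m}S_\nu$, with basis $X^\alpha\otimes e_\tau$. For $n\ge|\lambda|+\lambda_1$, $\lambda^{(n)}=(n-|\lambda|,\lambda_1,\lambda_2,\dots)$ and $\square_0$ is the unique box of $\lambda^{(n+1)}$ not in $\lambda^{(n)}$. $\mathfrak{q}:S_{\lambda^{(n+1)}}\to S_{\lambda^{(n)}}$ sends $e_\tau$ to $e_{\tau|_{\lambda^{(n)}}}$ if $\tau(\square_0)=n+1$ and to $0$ otherwise. $\Phi^{(n)}_\lambda$ is the linear map $X^\alpha\otimes v\mapsto[\alpha_{n+1}=0]\,X_1^{\alpha_1}\cdots X_n^{\alpha_n}\otimes\mathfrak{q}(v)$.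 *)

theory Defs
  imports "HOL-Computational_Algebra.Polynomial" "HOL-Computational_Algebra.Fraction_Field"
begin

section \<open>Ground field Q(q,t)\<close>

type_synonym K = "rat poly poly fract"

definition qq :: K where "qq = Fract [:0, 1:] 1"
definition tt :: K where "tt = Fract [:[:0, 1:]:] 1"

definition is_partition :: "nat list \<Rightarrow> bool" where
  "is_partition lam \<longleftrightarrow> sorted_wrt (\<ge>) lam \<and> 0 \<notin> set lam"

definition lam1 :: "nat list \<Rightarrow> nat" where
  "lam1 lam = (case lam of [] \<Rightarrow> 0 | x # _ \<Rightarrow> x)"

definition shift_part :: "nat \<Rightarrow> nat list \<Rightarrow> nat list" where
  "shift_part n lam = (n - sum_list lam) # lam"

text \<open>Boxes (row a, column b), 1-indexed, English notation.\<close>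
definition boxes :: "nat list \<Rightarrow> (nat \<times> nat) set" where
  "boxes nu = {(a, b). 1 \<le> a \<and> a \<le> length nu \<and> 1 \<le> b \<and> b \<le> nu ! (a - 1)}"

type_synonym tab = "nat \<Rightarrow> nat \<times> nat"

text \<open>A standard tableau of shape nu (|nu| = m) is encoded as the map from labels 1..m
  to boxes (bijective, increasing along rows and columns); labels outside 1..m go to (0,0).\<close>
definition SYT :: "nat list \<Rightarrow> tab set" where
  "SYT nu = {\<tau>. bij_betw \<tau> {1..sum_list nu} (boxes nu)
      \<and> (\<forall>k. k \<notin> {1..sum_list nu} \<longrightarrow> \<tau> k = (0, 0))
      \<and> (\<forall>i\<in>{1..sum_list nu}. \<forall>j\<in>{1..sum_list nu}.
            fst (\<tau> i) \<le> fst (\<tau> j) \<and> snd (\<tau> i) \<le> snd (\<tau> j) \<longrightarrow> i \<le> j)}"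

definition content :: "tab \<Rightarrow> nat \<Rightarrow> int" where
  "content \<tau> i = int (snd (\<tau> i)) - int (fst (\<tau> i))"

definition tpow :: "int \<Rightarrow> K" where
  "tpow c = tt powi c"

definition swap_tab :: "nat \<Rightarrow> tab \<Rightarrow> tab" where
  "swap_tab i \<tau> = (\<lambda>k. if k = i then \<tau> (Suc i) else if k = Suc i then \<tau> i else \<tau> k)"

text \<open>Tcoef nu i sigma tau = coefficient of e_tau in T_i e_sigma.  This is the unique
  action determined by the conditions in the paper (theta-bar_i e_tau = t^{c_tau(i)} e_tau,
  the intertwiner normalisation, and the row/column scalars).\<close>
definition Tcoef :: "nat list \<Rightarrow> nat \<Rightarrow> tab \<Rightarrow> tab \<Rightarrow> K" where
  "Tcoef nu i \<sigma> \<tau> =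
    (let a = tpow (content \<sigma> i); b = tpow (content \<sigma> (Suc i)) in
     if \<tau> = \<sigma> then (1 - tt) * a / (a - b)
     else if \<tau> = swap_tab i \<sigma> \<and> \<tau> \<in> SYT nu then
       (if content \<sigma> i - content \<sigma> (Suc i) > 1 then 1
        else (tt * a - b) * (a - tt * b) / (a - b)^2)
     else 0)"

type_synonym svec = "tab \<Rightarrow> K"

definition ST :: "nat list \<Rightarrow> nat \<Rightarrow> svec \<Rightarrow> svec" where
  "ST nu i s = (\<lambda>\<tau>. \<Sum>\<sigma>\<in>SYT nu. Tcoef nu i \<sigma> \<tau> * s \<sigma>)"

text \<open>T_i^{-1} = t^{-1} (T_i + t - 1)\<close>
definition STinv :: "nat list \<Rightarrow> nat \<Rightarrow> svec \<Rightarrow> svec" where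
  "STinv nu i s = (\<lambda>\<tau>. (ST nu i s \<tau> + (tt - 1) * s \<tau>) / tt)"

text \<open>Action of pi_m = t^{m-1} theta_1 T_1^{-1} ... T_{m-1}^{-1} on S_nu (theta_1 acts as 1).\<close>
definition Pbar :: "nat list \<Rightarrow> svec \<Rightarrow> svec" where
  "Pbar nu s = (\<lambda>\<tau>. tt ^ (sum_list nu - 1) * foldr (STinv nu) [1..<sum_list nu] s \<tau>)"

section \<open>Polynomials in X_1, X_2, ... as coefficient functions on exponent vectors\<close>

type_synonym mpol = "(nat \<Rightarrow> nat) \<Rightarrow> K"

definition pX :: "nat \<Rightarrow> mpol \<Rightarrow> mpol" where
  "pX j f = (\<lambda>\<alpha>. if \<alpha> j = 0 then 0 else f (\<alpha>(j := \<alpha> j - 1)))"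

definition psw :: "nat \<Rightarrow> mpol \<Rightarrow> mpol" where
  "psw i f = (\<lambda>\<alpha>. f (\<alpha>(i := \<alpha> (Suc i), Suc i := \<alpha> i)))"

text \<open>D_i f = X_i (f - s_i f) / (X_{i+1} - X_i)\<close>
definition pD :: "nat \<Rightarrow> mpol \<Rightarrow> mpol" where
  "pD i f = pX i (THE h. finite {\<alpha>. h \<alpha> \<noteq> 0} \<and>
      (\<lambda>\<alpha>. pX (Suc i) h \<alpha> - pX i h \<alpha>) = (\<lambda>\<alpha>. f \<alpha> - psw i f \<alpha>))"

text \<open>f(X_1,...,X_m) |-> f(X_2,...,X_m,q X_1)\<close>
definition ppi :: "nat \<Rightarrow> mpol \<Rightarrow> mpol" where
  "ppi m f = (\<lambda>\<beta>. qq ^ (\<beta> 1) *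
      f (\<lambda>j. if 1 \<le> j \<and> j < m then \<beta> (Suc j) else if j = m then \<beta> 1 else \<beta> j))"

section \<open>The D_m-module V_nu = D_m \<otimes>_{A_m} S_nu\<close>

text \<open>An element sum c_{alpha,tau} X^alpha \<otimes> e_tau is stored as v tau alpha = c_{alpha,tau}.\<close>
type_synonym vec = "tab \<Rightarrow> mpol"

definition Vspace :: "nat list \<Rightarrow> vec set" where
  "Vspace nu = {v. finite {(\<tau>, \<alpha>). v \<tau> \<alpha> \<noteq> 0} \<and>
     (\<forall>\<tau> \<alpha>. v \<tau> \<alpha> \<noteq> 0 \<longrightarrow> \<tau> \<in> SYT nu \<and> (\<forall>k. k \<notin> {1..sum_list nu} \<longrightarrow> \<alpha> k = 0))}"

definition VX :: "nat \<Rightarrow> vec \<Rightarrow> vec" where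
  "VX j v = (\<lambda>\<tau>. pX j (v \<tau>))"

text \<open>T_i (f \<otimes> w) = (s_i f) \<otimes> T_i w + (t - 1) D_i(f) \<otimes> w  (PBW form of the relations)\<close>
definition VT :: "nat list \<Rightarrow> nat \<Rightarrow> vec \<Rightarrow> vec" where
  "VT nu i v = (\<lambda>\<tau> \<alpha>. (\<Sum>\<sigma>\<in>SYT nu. Tcoef nu i \<sigma> \<tau> * psw i (v \<sigma>) \<alpha>)
                      + (tt - 1) * pD i (v \<tau>) \<alpha>)"

definition VTinv :: "nat list \<Rightarrow> nat \<Rightarrow> vec \<Rightarrow> vec" where
  "VTinv nu i v = (\<lambda>\<tau> \<alpha>. (VT nu i v \<tau> \<alpha> + (tt - 1) * v \<tau> \<alpha>) / tt)"

text \<open>pi_m (f \<otimes> w) = f(X_2,...,X_m,qX_1) \<otimes> pi_m w\<close>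
definition Vpi :: "nat list \<Rightarrow> vec \<Rightarrow> vec" where
  "Vpi nu v = (\<lambda>\<tau> \<alpha>. \<Sum>\<sigma>\<in>SYT nu.
      Pbar nu (\<lambda>\<rho>. if \<rho> = \<sigma> then 1 else 0) \<tau> * ppi (sum_list nu) (v \<sigma>) \<alpha>)"

text \<open>theta_1 = t^{-(m-1)} pi_m T_{m-1} ... T_1,  theta_{i+1} = t T_i^{-1} theta_i T_i^{-1}\<close>
fun Vtheta :: "nat list \<Rightarrow> nat \<Rightarrow> vec \<Rightarrow> vec" where
  "Vtheta nu 0 v = v"
| "Vtheta nu (Suc 0) v =
     (\<lambda>\<tau> \<alpha>. Vpi nu (foldr (VT nu) (rev [1..<sum_list nu]) v) \<tau> \<alpha> / tt ^ (sum_list nu - 1))"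
| "Vtheta nu (Suc (Suc i)) v =
     (\<lambda>\<tau> \<alpha>. tt * VTinv nu (Suc i) (Vtheta nu (Suc i) (VTinv nu (Suc i) v)) \<tau> \<alpha>)"

text \<open>X^alpha \<otimes> e_tau |-> [alpha_{n+1} = 0] X^alpha \<otimes> q(e_tau), where q(e_tau) = e_{tau|} if
  tau(box_0) = n+1, box_0 = (1, n+1-|lambda|), and 0 otherwise.\<close>
definition Phi :: "nat \<Rightarrow> nat list \<Rightarrow> vec \<Rightarrow> vec" where
  "Phi n lam v = (\<lambda>\<rho> \<alpha>. if \<alpha> (Suc n) = 0 \<and> \<rho> \<in> SYT (shift_part n lam)
      then v (\<rho>(Suc n := (1, Suc n - sum_list lam))) \<alpha> else 0)"

end

theory Submission
  imports Defs "HOL-Library.FuncSet"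
begin


lemma tt_pow: "tt ^ k = Fract ([:[:0,1:]:] ^ k) 1"
  by (induct k) (simp_all add: tt_def One_fract_def)

lemma pc_pow: "[:a:] ^ k = [:a ^ k:]"
  by (induct k) (simp_all add: one_pCons mult.commute)

lemma tt_pow_ne1: "k > 0 \<Longrightarrow> tt ^ k \<noteq> 1"
proof
  assume k: "k > 0" and h: "tt ^ k = 1"
  have "[:[:0,1:]:] ^ k = (1 :: rat poly poly)"
    using h by (simp add: tt_pow One_fract_def eq_fract)
  hence "[:[:0::rat,1:] ^ k:] = 1" by (simp add: pc_pow)
  hence "[:0::rat,1:] ^ k = 1" by (simp add: one_pCons)
  hence "degree ([:0::rat,1:] ^ k) = 0" by simp
  moreover have "degree ([:0::rat,1:] ^ k) = k" by (simp add: degree_power_eq)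
  ultimately show False using k by simp
qed

lemma tt_nz [simp]: "tt \<noteq> 0"
  by (simp add: tt_def eq_fract Zero_fract_def)

lemma tpow_nz [simp]: "tpow c \<noteq> 0"
  by (simp add: tpow_def)

lemma tpow_add: "tpow (c + d) = tpow c * tpow d"
  by (simp add: tpow_def power_int_add)

lemma tpow_inj: assumes "tpow c = tpow d" shows "c = d"
proof (rule ccontr)
  assume ne: "c \<noteq> d"
  { fix c d :: int assume lt: "c < d" and eq: "tpow c = tpow d"
    have dd: "d = c + int (nat (d - c))" using lt by simp
    have "tpow d = tpow c * tt ^ nat (d - c)"
      unfolding tpow_def by (subst dd) (simp only: power_int_add tt_nz power_int_of_nat simp_thms)
    hence False using eq lt tt_pow_ne1[of "nat (d - c)"] by (simp add: tpow_def)
  } note * = this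
  show False using ne assms *[of c d] *[of d c] by (cases "c < d") auto
qed


definition good :: "nat list \<Rightarrow> bool" where
  "good nu \<longleftrightarrow> (\<forall>a a'. a \<le> a' \<longrightarrow> a' < length nu \<longrightarrow> nu ! a' \<le> nu ! a)"

lemma boxes_iff: "(a, b) \<in> boxes nu \<longleftrightarrow> 1 \<le> a \<and> a \<le> length nu \<and> 1 \<le> b \<and> b \<le> nu ! (a - 1)"
  by (simp add: boxes_def)

lemma good_dc:
  assumes "good nu" "(a', b') \<in> boxes nu" "1 \<le> a" "a \<le> a'" "1 \<le> b" "b \<le> b'"
  shows "(a, b) \<in> boxes nu"
proof -
  have "nu ! (a' - 1) \<le> nu ! (a - 1)" using assms(1,2,3,4) unfolding good_def boxes_iff by auto
  thus ?thesis using assms(2-6) unfolding boxes_iff by auto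
qed

lemma SYT_bij: "\<tau> \<in> SYT nu \<Longrightarrow> bij_betw \<tau> {1..sum_list nu} (boxes nu)"
  unfolding SYT_def mem_Collect_eq by (elim conjE)
lemma SYT_out: "\<tau> \<in> SYT nu \<Longrightarrow> k \<notin> {1..sum_list nu} \<Longrightarrow> \<tau> k = (0, 0)"
  unfolding SYT_def mem_Collect_eq by (elim conjE) (drule spec[where x=k], erule mp)
lemma SYT_mono: "\<tau> \<in> SYT nu \<Longrightarrow> i \<in> {1..sum_list nu} \<Longrightarrow> j \<in> {1..sum_list nu} \<Longrightarrow>
   fst (\<tau> i) \<le> fst (\<tau> j) \<Longrightarrow> snd (\<tau> i) \<le> snd (\<tau> j) \<Longrightarrow> i \<le> j"
  unfolding SYT_def mem_Collect_eq by (elim conjE) (drule bspec[where x=i], assumption, drule bspec[where x=j], assumption, simp)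
lemma SYT_box: "\<tau> \<in> SYT nu \<Longrightarrow> i \<in> {1..sum_list nu} \<Longrightarrow> \<tau> i \<in> boxes nu"
  using bij_betwE[OF SYT_bij] by blast
lemma SYT_inj: "\<tau> \<in> SYT nu \<Longrightarrow> i \<in> {1..sum_list nu} \<Longrightarrow> j \<in> {1..sum_list nu} \<Longrightarrow> \<tau> i = \<tau> j \<Longrightarrow> i = j"
  by (rule inj_onD[OF bij_betw_imp_inj_on[OF SYT_bij]])
lemma SYT_surj: assumes "\<tau> \<in> SYT nu" "x \<in> boxes nu" shows "\<exists>j\<in>{1..sum_list nu}. \<tau> j = x"
proof -
  have "x \<in> \<tau> ` {1..sum_list nu}" using bij_betw_imp_surj_on[OF SYT_bij[OF assms(1)]] assms(2) by simp
  thus ?thesis by (auto simp del: atLeastAtMost_iff)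
qed

lemma box_ge1: "x \<in> boxes nu \<Longrightarrow> 1 \<le> fst x \<and> 1 \<le> snd x"
  by (cases x) (simp add: boxes_iff)

lemma swap_swap [simp]: "swap_tab i (swap_tab i \<tau>) = \<tau>"
  by (rule ext) (simp add: swap_tab_def)

lemma swap_neq:
  assumes "\<tau> \<in> SYT nu" "1 \<le> i" "Suc i \<le> sum_list nu"
  shows "swap_tab i \<tau> \<noteq> \<tau>"
proof
  assume "swap_tab i \<tau> = \<tau>"
  hence "\<tau> (Suc i) = \<tau> i" by (metis swap_tab_def)
  from SYT_inj[OF assms(1) _ _ this] assms show False by auto
qed

lemma content_neq:
  assumes "\<tau> \<in> SYT nu" "1 \<le> i" "Suc i \<le> sum_list nu"
  shows "content \<tau> i \<noteq> content \<tau> (Suc i)"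
proof
  assume ceq: "content \<tau> i = content \<tau> (Suc i)"
  obtain a b where ab: "\<tau> i = (a, b)" by force
  obtain a2 b2 where ab2: "\<tau> (Suc i) = (a2, b2)" by force
  have iin: "i \<in> {1..sum_list nu}" and i2in: "Suc i \<in> {1..sum_list nu}" using assms by auto
  have ne: "(a, b) \<noteq> (a2, b2)" using SYT_inj[OF assms(1) iin i2in] ab ab2 by auto
  have c: "int b - int a = int b2 - int a2" using ceq ab ab2 by (simp add: content_def)
  show False
  proof (cases "a < a2")
    case True
    hence "b < b2" using c by linarith
    have bx2: "(a2, b2) \<in> boxes nu" using SYT_box[OF assms(1) i2in] ab2 by simp
    have bx1: "(a, b) \<in> boxes nu" using SYT_box[OF assms(1) iin] ab by simp
    have "(a2, b) \<in> boxes nu" using bx2 bx1 \<open>b < b2\<close> by (simp add: boxes_iff)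
    then obtain j where j: "j \<in> {1..sum_list nu}" "\<tau> j = (a2, b)" using SYT_surj[OF assms(1)] by blast
    have "i \<le> j" using SYT_mono[OF assms(1) iin j(1)] ab j(2) True by simp
    moreover have "j \<le> Suc i" using SYT_mono[OF assms(1) j(1) i2in] ab2 j(2) \<open>b < b2\<close> by simp
    moreover have "j \<noteq> i" using ab j(2) True by auto
    moreover have "j \<noteq> Suc i" using ab2 j(2) \<open>b < b2\<close> by auto
    ultimately show False by simp
  next
    case False
    hence "a2 < a" using ne c by (cases "a = a2") auto
    hence "b2 < b" using c by linarith
    have "Suc i \<le> i" using SYT_mono[OF assms(1) i2in iin] ab ab2 \<open>a2 < a\<close> \<open>b2 < b\<close> by simp
    thus False by simp
  qed
qed

lemma first_box:
  assumes "\<tau> \<in> SYT nu" "(1, 1) \<in> boxes nu"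
  shows "\<tau> 1 = (1, 1)"
proof -
  obtain j where j: "j \<in> {1..sum_list nu}" "\<tau> j = (1, 1)" using SYT_surj[OF assms] by blast
  have one: "1 \<in> {1..sum_list nu}" using j by auto
  have "fst (\<tau> j) \<le> fst (\<tau> 1) \<and> snd (\<tau> j) \<le> snd (\<tau> 1)"
    using j(2) box_ge1[OF SYT_box[OF assms(1) one]] by simp
  hence "j \<le> 1" using SYT_mono[OF assms(1) j(1) one] by simp
  thus ?thesis using j by auto
qed

definition tsw :: "nat \<Rightarrow> nat \<Rightarrow> nat" where
  "tsw i k = (if k = i then Suc i else if k = Suc i then i else k)"

lemma swap_tab_comp: "swap_tab i \<tau> = \<tau> \<circ> tsw i"
  by (rule ext) (simp add: swap_tab_def tsw_def)

lemma tsw_bij: "1 \<le> i \<Longrightarrow> Suc i \<le> m \<Longrightarrow> bij_betw (tsw i) {1..m} {1..m}"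
  unfolding bij_betw_def inj_on_def
proof (intro conjI ballI impI)
  fix x y assume "1 \<le> i" "Suc i \<le> m" "tsw i x = tsw i y" thus "x = y"
    by (auto simp: tsw_def split: if_splits)
next
  assume a: "1 \<le> i" "Suc i \<le> m"
  show "tsw i ` {1..m} = {1..m}"
  proof
    show "tsw i ` {1..m} \<subseteq> {1..m}" using a by (auto simp: tsw_def)
    show "{1..m} \<subseteq> tsw i ` {1..m}"
    proof
      fix x assume x: "x \<in> {1..m}"
      have "tsw i (tsw i x) = x" by (simp add: tsw_def)
      moreover have "tsw i x \<in> {1..m}" using a x by (auto simp: tsw_def)
      ultimately show "x \<in> tsw i ` {1..m}" by (metis imageI)
    qed
  qed
qed

lemma swap_notSYT:
  assumes "\<tau> \<in> SYT nu" "good nu" "1 \<le> i" "Suc i \<le> sum_list nu" "swap_tab i \<tau> \<notin> SYT nu"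
  shows "\<tau> (Suc i) = (fst (\<tau> i), Suc (snd (\<tau> i))) \<or> \<tau> (Suc i) = (Suc (fst (\<tau> i)), snd (\<tau> i))"
proof -
  let ?m = "sum_list nu"
  have iin: "i \<in> {1..?m}" and i2in: "Suc i \<in> {1..?m}" using assms by auto
  have bij: "bij_betw (swap_tab i \<tau>) {1..?m} (boxes nu)"
    unfolding swap_tab_comp using bij_betw_trans[OF tsw_bij[OF assms(3,4)] SYT_bij[OF assms(1)]] .
  have out: "\<forall>k. k \<notin> {1..?m} \<longrightarrow> swap_tab i \<tau> k = (0, 0)"
    using SYT_out[OF assms(1)] iin i2in by (auto simp: swap_tab_def)
  have nm: "\<not> (\<forall>j\<in>{1..?m}. \<forall>k\<in>{1..?m}. fst (swap_tab i \<tau> j) \<le> fst (swap_tab i \<tau> k) \<and> snd (swap_tab i \<tau> j) \<le> snd (swap_tab i \<tau> k) \<longrightarrow> j \<le> k)"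
    using assms(5) bij out unfolding SYT_def mem_Collect_eq by blast
  then obtain j k where jk: "j \<in> {1..?m}" "k \<in> {1..?m}"
    "fst (swap_tab i \<tau> j) \<le> fst (swap_tab i \<tau> k)" "snd (swap_tab i \<tau> j) \<le> snd (swap_tab i \<tau> k)" "\<not> j \<le> k"
    by blast
  have pj: "tsw i j \<in> {1..?m}" and pk: "tsw i k \<in> {1..?m}"
    using jk(1,2) assms(3,4) by (auto simp: tsw_def)
  have "tsw i j \<le> tsw i k"
    using SYT_mono[OF assms(1) pj pk] jk(3,4) by (simp add: swap_tab_comp)
  hence jk2: "j = Suc i" "k = i" using jk(5) by (auto simp: tsw_def split: if_splits)
  obtain a b where ab: "\<tau> i = (a, b)" by force
  obtain a2 b2 where ab2: "\<tau> (Suc i) = (a2, b2)" by force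
  have le: "a \<le> a2" "b \<le> b2" using jk(3,4) jk2 ab ab2 by (simp_all add: swap_tab_def)
  have ne: "(a, b) \<noteq> (a2, b2)" using SYT_inj[OF assms(1) iin i2in] ab ab2 by auto
  have bx2: "(a2, b2) \<in> boxes nu" using SYT_box[OF assms(1) i2in] ab2 by simp
  have bx1: "(a, b) \<in> boxes nu" using SYT_box[OF assms(1) iin] ab by simp
  show ?thesis
  proof (cases "b < b2")
    case True
    have "(a, Suc b) \<in> boxes nu" using good_dc[OF assms(2) bx2, of a "Suc b"] le True box_ge1[OF bx1] by simp
    then obtain j where j: "j \<in> {1..?m}" "\<tau> j = (a, Suc b)" using SYT_surj[OF assms(1)] by blast
    have "i \<le> j" using SYT_mono[OF assms(1) iin j(1)] ab j(2) by simp
    moreover have "j \<le> Suc i" using SYT_mono[OF assms(1) j(1) i2in] ab2 j(2) le True by simp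
    moreover have "j \<noteq> i" using ab j(2) by auto
    ultimately have "j = Suc i" by simp
    thus ?thesis using j(2) ab ab2 by simp
  next
    case False
    hence bb: "b = b2" using le by simp
    hence "a < a2" using le ne by auto
    have "(Suc a, b) \<in> boxes nu" using good_dc[OF assms(2) bx2, of "Suc a" b] le \<open>a < a2\<close> box_ge1[OF bx1] by simp
    then obtain j where j: "j \<in> {1..?m}" "\<tau> j = (Suc a, b)" using SYT_surj[OF assms(1)] by blast
    have "i \<le> j" using SYT_mono[OF assms(1) iin j(1)] ab j(2) by simp
    moreover have "j \<le> Suc i" using SYT_mono[OF assms(1) j(1) i2in] ab2 j(2) le \<open>a < a2\<close> bb by simp
    moreover have "j \<noteq> i" using ab j(2) by auto
    ultimately have "j = Suc i" by simp
    thus ?thesis using j(2) ab ab2 by simp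
  qed
qed


lemma good_shift:
  assumes "is_partition lam" "sum_list lam + lam1 lam \<le> k"
  shows "good (shift_part k lam)"
  unfolding good_def
proof (intro allI impI)
  fix a a' assume aa: "a \<le> a'" "a' < length (shift_part k lam)"
  have sw: "sorted_wrt (\<ge>) lam" using assms(1) by (simp add: is_partition_def)
  show "shift_part k lam ! a' \<le> shift_part k lam ! a"
  proof (cases a)
    case 0
    show ?thesis
    proof (cases a')
      case 0 thus ?thesis using \<open>a = 0\<close> by simp
    next
      case (Suc b)
      have bl: "b < length lam" using aa Suc by (simp add: shift_part_def)
      have "lam ! b \<le> lam ! 0"
        using sorted_wrt_nth_less[OF sw, of 0 b] bl by (cases b) auto
      moreover have "lam ! 0 = lam1 lam" using bl by (cases lam) (auto simp: lam1_def)
      ultimately show ?thesis using Suc 0 assms(2) by (simp add: shift_part_def)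
    qed
  next
    case (Suc c)
    then obtain b where b: "a' = Suc b" "c \<le> b" using aa by (cases a') auto
    have bl: "b < length lam" using aa b by (simp add: shift_part_def)
    have "lam ! b \<le> lam ! c"
      using sorted_wrt_nth_less[OF sw, of c b] bl b by (cases "c = b") auto
    thus ?thesis using Suc b by (simp add: shift_part_def)
  qed
qed

locale shp =
  fixes lam :: "nat list" and n :: nat
  assumes part: "is_partition lam" and bnd: "sum_list lam + lam1 lam \<le> n"
begin

abbreviation "nu1 \<equiv> shift_part (Suc n) lam"
abbreviation "nu0 \<equiv> shift_part n lam"
abbreviation "x0 \<equiv> n - sum_list lam"
abbreviation "box0 \<equiv> (1::nat, Suc n - sum_list lam)"
abbreviation "ext (\<rho>::tab) \<equiv> \<rho>(Suc n := box0)"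

lemma sl_le: "sum_list lam \<le> n" using bnd by simp

lemma box0_eq: "Suc n - sum_list lam = Suc x0" using sl_le by simp

lemma good1: "good nu1" using good_shift[OF part] bnd by simp
lemma good0: "good nu0" using good_shift[OF part] bnd by simp

lemma sum1 [simp]: "sum_list nu1 = Suc n" using sl_le by (simp add: shift_part_def)
lemma sum0 [simp]: "sum_list nu0 = n" using sl_le by (simp add: shift_part_def)

lemma lam_le_x0: "b < length lam \<Longrightarrow> lam ! b \<le> x0"
proof -
  assume bl: "b < length lam"
  have sw: "sorted_wrt (\<ge>) lam" using part by (simp add: is_partition_def)
  have "lam ! b \<le> lam ! 0"
    using sorted_wrt_nth_less[OF sw, of 0 b] bl by (cases b) auto
  moreover have "lam ! 0 = lam1 lam" using bl by (cases lam) (auto simp: lam1_def)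
  ultimately show ?thesis using bnd by simp
qed

lemma boxes0_col: "(a, b) \<in> boxes nu0 \<Longrightarrow> b \<le> x0"
proof -
  assume h: "(a, b) \<in> boxes nu0"
  show ?thesis
  proof (cases "a = 1")
    case True thus ?thesis using h by (simp add: boxes_iff shift_part_def)
  next
    case False
    hence a2: "a \<ge> 2" using h by (simp add: boxes_iff)
    then obtain c where c: "a = Suc (Suc c)" by (metis add_2_eq_Suc le_Suc_ex)
    have "b \<le> lam ! c" "c < length lam" using h c by (simp_all add: boxes_iff shift_part_def)
    thus ?thesis using lam_le_x0 by (meson le_trans)
  qed
qed

lemma box0_notin: "box0 \<notin> boxes nu0"
  using boxes0_col box0_eq by fastforce

lemma boxes1: "boxes nu1 = boxes nu0 \<union> {box0}"
proof (rule set_eqI)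
  fix x :: "nat \<times> nat"
  obtain a b where x: "x = (a, b)" by force
  show "x \<in> boxes nu1 \<longleftrightarrow> x \<in> boxes nu0 \<union> {box0}"
    unfolding x boxes_iff using sl_le
    by (cases "a = 1") (auto simp: shift_part_def boxes_iff nth_Cons')
qed

lemma box11: "(1, 1) \<in> boxes nu1"
  using sl_le by (simp add: boxes_iff shift_part_def)

lemma ext_SYT:
  assumes r: "\<rho> \<in> SYT nu0"
  shows "ext \<rho> \<in> SYT nu1"
proof -
  have b0: "bij_betw \<rho> {1..n} (boxes nu0)" using SYT_bij[OF r] by simp
  have b1: "bij_betw (ext \<rho>) {1..n} (boxes nu0)"
    using b0 by (rule bij_betw_cong[THEN iffD1, rotated]) simp
  have "bij_betw (ext \<rho>) ({1..n} \<union> {Suc n}) (boxes nu0 \<union> {ext \<rho> (Suc n)})"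
    using notIn_Un_bij_betw[OF _ _ b1, of "Suc n"] box0_notin by simp
  moreover have "{1..n} \<union> {Suc n} = {1..Suc n}" by auto
  ultimately have bij: "bij_betw (ext \<rho>) {1..sum_list nu1} (boxes nu1)"
    by (simp add: boxes1)
  have out: "\<forall>k. k \<notin> {1..sum_list nu1} \<longrightarrow> ext \<rho> k = (0, 0)"
  proof (intro allI impI)
    fix k assume k: "k \<notin> {1..sum_list nu1}"
    hence "k \<noteq> Suc n" "k \<notin> {1..sum_list nu0}" by auto
    thus "ext \<rho> k = (0, 0)" using SYT_out[OF r] by simp
  qed
  have mono: "\<forall>i\<in>{1..sum_list nu1}. \<forall>j\<in>{1..sum_list nu1}.
      fst (ext \<rho> i) \<le> fst (ext \<rho> j) \<and> snd (ext \<rho> i) \<le> snd (ext \<rho> j) \<longrightarrow> i \<le> j"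
  proof (intro ballI impI)
    fix i j assume i: "i \<in> {1..sum_list nu1}" and j: "j \<in> {1..sum_list nu1}"
      and le: "fst (ext \<rho> i) \<le> fst (ext \<rho> j) \<and> snd (ext \<rho> i) \<le> snd (ext \<rho> j)"
    show "i \<le> j"
    proof (cases "j = Suc n")
      case True thus ?thesis using i by simp
    next
      case jn: False
      hence j0: "j \<in> {1..sum_list nu0}" using j by auto
      obtain a b where ab: "\<rho> j = (a, b)" by force
      have "b \<le> x0" using boxes0_col SYT_box[OF r j0] ab by simp
      show ?thesis
      proof (cases "i = Suc n")
        case True
        thus ?thesis using le jn ab \<open>b \<le> x0\<close> box0_eq by simp
      next
        case False
        hence i0: "i \<in> {1..sum_list nu0}" using i by auto
        show ?thesis using SYT_mono[OF r i0 j0] le False jn by simp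
      qed
    qed
  qed
  show ?thesis unfolding SYT_def mem_Collect_eq using bij out mono by blast
qed

lemma res_SYT:
  assumes t: "\<tau> \<in> SYT nu1" and tb: "\<tau> (Suc n) = box0"
  shows "\<tau>(Suc n := (0, 0)) \<in> SYT nu0"
proof -
  let ?r = "\<tau>(Suc n := (0, 0))"
  have b1: "bij_betw \<tau> ({1..n} \<union> {Suc n}) (boxes nu0 \<union> {\<tau> (Suc n)})"
    using SYT_bij[OF t] tb boxes1 by (simp add: atLeastAtMostSuc_conv Un_commute)
  have "bij_betw \<tau> {1..n} (boxes nu0)"
    using notIn_Un_bij_betw3[of "Suc n" "{1..n}" \<tau> "boxes nu0"] b1 tb box0_notin by simp
  hence "bij_betw ?r {1..n} (boxes nu0)"
    by (rule bij_betw_cong[THEN iffD1, rotated]) simp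
  hence bij: "bij_betw ?r {1..sum_list nu0} (boxes nu0)" by simp
  have out: "\<forall>k. k \<notin> {1..sum_list nu0} \<longrightarrow> ?r k = (0, 0)"
  proof (intro allI impI)
    fix k assume k: "k \<notin> {1..sum_list nu0}"
    show "?r k = (0, 0)"
    proof (cases "k = Suc n")
      case False
      hence "k \<notin> {1..sum_list nu1}" using k by auto
      thus ?thesis using SYT_out[OF t] False by simp
    qed simp
  qed
  have mono: "\<forall>i\<in>{1..sum_list nu0}. \<forall>j\<in>{1..sum_list nu0}.
      fst (?r i) \<le> fst (?r j) \<and> snd (?r i) \<le> snd (?r j) \<longrightarrow> i \<le> j"
  proof (intro ballI impI)
    fix i j assume i: "i \<in> {1..sum_list nu0}" and j: "j \<in> {1..sum_list nu0}"
      and le: "fst (?r i) \<le> fst (?r j) \<and> snd (?r i) \<le> snd (?r j)"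
    have i1: "i \<in> {1..sum_list nu1}" and j1: "j \<in> {1..sum_list nu1}" using i j by auto
    show "i \<le> j" using SYT_mono[OF t i1 j1] le i j by simp
  qed
  show ?thesis unfolding SYT_def mem_Collect_eq using bij out mono by blast
qed

lemma ext_res: "\<tau> (Suc n) = box0 \<Longrightarrow> ext (\<tau>(Suc n := (0, 0))) = \<tau>"
  by (rule ext) simp

lemma res_ext: "\<rho> \<in> SYT nu0 \<Longrightarrow> (ext \<rho>)(Suc n := (0, 0)) = \<rho>"
  by (rule ext) (simp add: SYT_out)

lemma content_box0: "content (ext \<rho>) (Suc n) = int x0"
  using box0_eq by (simp add: content_def)

end


lemma finite_boxes: "finite (boxes nu)"
proof (rule finite_subset)
  show "boxes nu \<subseteq> {0..length nu} \<times> {0..sum_list nu}"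
  proof
    fix x assume x: "x \<in> boxes nu"
    obtain a b where ab: "x = (a, b)" by force
    have "b \<le> nu ! (a - 1)" "a - 1 < length nu" "a \<le> length nu" using x ab by (auto simp: boxes_iff)
    moreover have "nu ! (a - 1) \<le> sum_list nu" using elem_le_sum_list calculation(2) by blast
    ultimately show "x \<in> {0..length nu} \<times> {0..sum_list nu}" using ab by auto
  qed
qed simp

lemma finite_SYT: "finite (SYT nu)"
proof (rule finite_subset)
  let ?A = "{1..sum_list nu}"
  let ?F = "\<lambda>f::nat \<Rightarrow> nat \<times> nat. \<lambda>k. if k \<in> ?A then f k else (0, 0)"
  show "SYT nu \<subseteq> ?F ` (PiE ?A (\<lambda>_. boxes nu))"
  proof
    fix \<tau> assume t: "\<tau> \<in> SYT nu"
    have "\<tau> = ?F (restrict \<tau> ?A)" using SYT_out[OF t] by (auto simp: fun_eq_iff)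
    moreover have "restrict \<tau> ?A \<in> PiE ?A (\<lambda>_. boxes nu)" using SYT_box[OF t] by auto
    ultimately show "\<tau> \<in> ?F ` (PiE ?A (\<lambda>_. boxes nu))" by blast
  qed
  show "finite (?F ` (PiE ?A (\<lambda>_. boxes nu)))" by (intro finite_imageI finite_PiE finite_boxes) simp
qed

lemma content_swap1 [simp]: "content (swap_tab i \<tau>) i = content \<tau> (Suc i)"
  by (simp add: content_def swap_tab_def)
lemma content_swap2 [simp]: "content (swap_tab i \<tau>) (Suc i) = content \<tau> i"
  by (simp add: content_def swap_tab_def)

definition Pc :: "K \<Rightarrow> K \<Rightarrow> K" where
  "Pc a b = (tt * a - b) * (a - tt * b) / (a - b)^2"

lemma Tc_diag: "Tcoef nu i \<tau> \<tau> = (1 - tt) * tpow (content \<tau> i) / (tpow (content \<tau> i) - tpow (content \<tau> (Suc i)))"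
  by (simp add: Tcoef_def Let_def)

lemma Tc_other:
  assumes "\<sigma> \<noteq> \<tau>" "\<sigma> \<noteq> swap_tab i \<tau>"
  shows "Tcoef nu i \<sigma> \<tau> = 0"
proof -
  have "\<tau> \<noteq> swap_tab i \<sigma>" using assms(2) by (metis swap_swap)
  thus ?thesis using assms(1) by (simp add: Tcoef_def Let_def)
qed

lemma Tc_notSYT: "\<tau> \<notin> SYT nu \<Longrightarrow> \<sigma> \<in> SYT nu \<Longrightarrow> Tcoef nu i \<sigma> \<tau> = 0"
  by (auto simp: Tcoef_def Let_def)

lemma Tc_off:
  assumes "\<tau> \<in> SYT nu" "swap_tab i \<tau> \<noteq> \<tau>"
  shows "Tcoef nu i (swap_tab i \<tau>) \<tau> =
    (if content \<tau> (Suc i) - content \<tau> i > 1 then 1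
     else Pc (tpow (content \<tau> i)) (tpow (content \<tau> (Suc i))))"
proof -
  have "Pc (tpow (content \<tau> (Suc i))) (tpow (content \<tau> i)) = Pc (tpow (content \<tau> i)) (tpow (content \<tau> (Suc i)))"
    unfolding Pc_def by (simp add: power2_eq_square algebra_simps)
  thus ?thesis using assms by (simp add: Tcoef_def Let_def Pc_def)
qed

lemma ST_out: "\<tau> \<notin> SYT nu \<Longrightarrow> ST nu i g \<tau> = 0"
  unfolding ST_def by (rule sum.neutral) (simp add: Tc_notSYT)

lemma ST_pt:
  assumes t: "\<tau> \<in> SYT nu" and i: "1 \<le> i" "Suc i \<le> sum_list nu"
  shows "ST nu i g \<tau> = Tcoef nu i \<tau> \<tau> * g \<tau> +
     (if swap_tab i \<tau> \<in> SYT nu then Tcoef nu i (swap_tab i \<tau>) \<tau> * g (swap_tab i \<tau>) else 0)"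
proof -
  let ?F = "\<lambda>\<sigma>. Tcoef nu i \<sigma> \<tau> * g \<sigma>"
  let ?B = "SYT nu \<inter> {\<tau>, swap_tab i \<tau>}"
  have ne: "swap_tab i \<tau> \<noteq> \<tau>" using swap_neq[OF t i] .
  have "ST nu i g \<tau> = sum ?F (SYT nu)" by (simp add: ST_def)
  also have "\<dots> = sum ?F ?B"
    by (rule sum.mono_neutral_right) (auto simp: finite_SYT Tc_other)
  also have "\<dots> = ?F \<tau> + (if swap_tab i \<tau> \<in> SYT nu then ?F (swap_tab i \<tau>) else 0)"
  proof (cases "swap_tab i \<tau> \<in> SYT nu")
    case True
    hence "?B = {\<tau>, swap_tab i \<tau>}" using t by auto
    thus ?thesis using True ne by simp
  next
    case False
    hence "?B = {\<tau>}" using t by auto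
    thus ?thesis using False by simp
  qed
  finally show ?thesis .
qed


lemma alg_quad2:
  fixes a b t p p' r s x y :: K
  assumes ab: "a \<noteq> b" and p: "p = (1-t)*a/(a-b)" and p': "p' = (1-t)*b/(b-a)"
    and rs: "r * s = (t * a - b) * (a - t * b) / (a - b)^2"
  shows "p*(p*x + r*y) + r*(p'*y + s*x) = (1-t)*(p*x + r*y) + t*x"
proof -
  have ab': "a - b \<noteq> 0" "b - a \<noteq> 0" using ab by auto
  have hp: "p * (a - b) = (1-t)*a" using ab' p by simp
  have hp': "p' * (b - a) = (1-t)*b" using ab' p' by simp
  have hrs: "r * s * (a - b)^2 = (t * a - b) * (a - t * b)" using ab' rs by simp
  have e1: "p + p' = 1 - t" using hp hp' ab' by algebra
  have e2: "p*p + r*s = (1-t)*p + t" using hp hp' hrs ab' by algebra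
  have "p*(p*x + r*y) + r*(p'*y + s*x) = (p*p + r*s)*x + r*(p+p')*y" by (simp add: algebra_simps)
  also have "\<dots> = (1-t)*(p*x + r*y) + t*x" unfolding e1 e2 by (simp add: algebra_simps)
  finally show ?thesis .
qed

lemma alg_quad1:
  fixes a b t p x :: K
  assumes ab: "a \<noteq> b" and a0: "a \<noteq> 0" and p: "p = (1-t)*a/(a-b)" and c: "b = t * a \<or> a = t * b"
  shows "p*(p*x) = (1-t)*(p*x) + t*x"
proof -
  have ab': "a - b \<noteq> 0" using ab by auto
  have hp: "p * (a - b) = (1-t)*a" using ab' p by simp
  from c have "p = 1 \<or> p = - t"
  proof
    assume b: "b = t * a"
    have "p = 1" using hp ab' a0 b by algebra
    thus ?thesis ..
  next
    assume a: "a = t * b"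
    have "p = - t" using hp ab' a0 a by algebra
    thus ?thesis ..
  qed
  thus ?thesis by (auto simp: algebra_simps)
qed

lemma alg_th2:
  fixes a b t p p' r s x y :: K
  assumes ab: "a \<noteq> b" and t0: "t \<noteq> 0" and p: "p = (1-t)*a/(a-b)" and p': "p' = (1-t)*b/(b-a)"
    and rs: "r * s = (t * a - b) * (a - t * b) / (a - b)^2"
  shows "t * (((p + (t-1)) * (a * (((p + (t-1)) * x + r*y)/t)) + r * (b * (((p' + (t-1))*y + s*x)/t)))/t) = b*x"
proof -
  have ab': "a - b \<noteq> 0" "b - a \<noteq> 0" using ab by auto
  have hp: "p * (a - b) = (1-t)*a" using ab' p by simp
  have hp': "p' * (b - a) = (1-t)*b" using ab' p' by simp
  have hrs: "r * s * (a - b)^2 = (t * a - b) * (a - t * b)" using ab' rs by simp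
  have q1: "p + (t-1) = - p'" using hp hp' ab' by algebra
  have q2: "p' + (t-1) = - p" using hp hp' ab' by algebra
  have z: "p' * a + p * b = 0" using hp hp' ab' by algebra
  have w: "p' * p' * a + (r * s) * b = t * b" using hp hp' hrs ab' by algebra
  have "t * (((p + (t-1)) * (a * (((p + (t-1)) * x + r*y)/t)) + r * (b * (((p' + (t-1))*y + s*x)/t)))/t)
      = ((p' * p' * a + (r * s) * b) * x - r * (p' * a + p * b) * y) / t"
    unfolding q1 q2 using t0 by (simp add: field_simps)
  also have "\<dots> = b * x" unfolding w z using t0 by simp
  finally show ?thesis .
qed

lemma alg_th1:
  fixes a b t p x :: K
  assumes ab: "a \<noteq> b" and a0: "a \<noteq> 0" and t0: "t \<noteq> 0" and p: "p = (1-t)*a/(a-b)" and c: "b = t * a \<or> a = t * b"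
  shows "t * (((p + (t-1)) * (a * (((p + (t-1)) * x)/t)))/t) = b*x"
proof -
  have ab': "a - b \<noteq> 0" using ab by auto
  have hp: "p * (a - b) = (1-t)*a" using ab' p by simp
  from c show ?thesis
  proof
    assume b: "b = t * a"
    have "p = 1" using hp ab' a0 b by algebra
    thus ?thesis using t0 b by (simp add: field_simps)
  next
    assume a: "a = t * b"
    have "p = - t" using hp ab' a0 a by algebra
    thus ?thesis using t0 a by (simp add: field_simps)
  qed
qed


definition SYTsupp :: "nat list \<Rightarrow> svec \<Rightarrow> bool" where
  "SYTsupp nu g \<longleftrightarrow> (\<forall>\<sigma>. \<sigma> \<notin> SYT nu \<longrightarrow> g \<sigma> = 0)"

fun STdown :: "nat list \<Rightarrow> nat \<Rightarrow> svec \<Rightarrow> svec" where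
  "STdown nu 0 g = g"
| "STdown nu (Suc k) g = STinv nu (Suc k) (STdown nu k g)"

definition STup :: "nat list \<Rightarrow> nat \<Rightarrow> svec \<Rightarrow> svec" where
  "STup nu k g = foldr (STinv nu) [1..<Suc k] g"

lemma STup_0 [simp]: "STup nu 0 g = g" by (simp add: STup_def)
lemma STup_Suc: "STup nu (Suc k) g = STup nu k (STinv nu (Suc k) g)"
  by (simp add: STup_def)

lemma tpow_Suc: "tpow (c + 1) = tt * tpow c"
  by (simp add: tpow_def power_int_add_1 mult.commute)

lemma ST_supp: "SYTsupp nu (ST nu i g)"
  by (simp add: SYTsupp_def ST_out)
lemma STinv_supp: "SYTsupp nu g \<Longrightarrow> SYTsupp nu (STinv nu i g)"
  by (simp add: SYTsupp_def STinv_def ST_out)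
lemma STdown_supp: "SYTsupp nu g \<Longrightarrow> SYTsupp nu (STdown nu k g)"
  by (induct k) (simp_all add: STinv_supp)
lemma STup_supp: "SYTsupp nu g \<Longrightarrow> SYTsupp nu (STup nu k g)"
  by (induct k arbitrary: g) (simp_all add: STup_Suc STinv_supp)

lemma ST_scale: "ST nu i (\<lambda>\<sigma>. g \<sigma> / c) \<tau> = ST nu i g \<tau> / c"
  by (simp add: ST_def sum_divide_distrib)
lemma STinv_scale: "STinv nu i (\<lambda>\<sigma>. g \<sigma> / c) \<tau> = STinv nu i g \<tau> / c"
proof -
  have "ST nu i g \<tau> / c + (tt - 1) * (g \<tau> / c) = (ST nu i g \<tau> + (tt - 1) * g \<tau>) / c"
    by (simp add: add_divide_distrib)
  thus ?thesis by (simp add: STinv_def ST_scale)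
qed

lemma STinv_pt:
  assumes t: "\<tau> \<in> SYT nu" and i: "1 \<le> i" "Suc i \<le> sum_list nu"
  shows "STinv nu i g \<tau> = ((Tcoef nu i \<tau> \<tau> + (tt - 1)) * g \<tau> +
     (if swap_tab i \<tau> \<in> SYT nu then Tcoef nu i (swap_tab i \<tau>) \<tau> * g (swap_tab i \<tau>) else 0)) / tt"
proof -
  have "STinv nu i g \<tau> = (ST nu i g \<tau> + (tt - 1) * g \<tau>) / tt" by (simp add: STinv_def)
  also have "ST nu i g \<tau> + (tt - 1) * g \<tau> = (Tcoef nu i \<tau> \<tau> + (tt - 1)) * g \<tau> +
     (if swap_tab i \<tau> \<in> SYT nu then Tcoef nu i (swap_tab i \<tau>) \<tau> * g (swap_tab i \<tau>) else 0)"
    unfolding ST_pt[OF assms] by (simp add: distrib_right)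
  finally show ?thesis .
qed

locale gnu =
  fixes nu :: "nat list"
  assumes good: "good nu"
begin

lemma ab_ne:
  assumes "\<tau> \<in> SYT nu" "1 \<le> i" "Suc i \<le> sum_list nu"
  shows "tpow (content \<tau> i) \<noteq> tpow (content \<tau> (Suc i))"
  using content_neq[OF assms] tpow_inj by blast

lemma blk_1:
  assumes t: "\<tau> \<in> SYT nu" and i: "1 \<le> i" "Suc i \<le> sum_list nu" and ns: "swap_tab i \<tau> \<notin> SYT nu"
  shows "tpow (content \<tau> (Suc i)) = tt * tpow (content \<tau> i) \<or> tpow (content \<tau> i) = tt * tpow (content \<tau> (Suc i))"
proof -
  from swap_notSYT[OF t good i ns]
  have "content \<tau> (Suc i) = content \<tau> i + 1 \<or> content \<tau> i = content \<tau> (Suc i) + 1"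
    by (auto simp: content_def)
  thus ?thesis
  proof (elim disjE)
    assume h: "content \<tau> (Suc i) = content \<tau> i + 1"
    show ?thesis unfolding h tpow_Suc by simp
  next
    assume h: "content \<tau> i = content \<tau> (Suc i) + 1"
    show ?thesis unfolding h tpow_Suc by simp
  qed
qed

lemma blk_rs:
  assumes t: "\<tau> \<in> SYT nu" and i: "1 \<le> i" "Suc i \<le> sum_list nu" and s: "swap_tab i \<tau> \<in> SYT nu"
  shows "Tcoef nu i (swap_tab i \<tau>) \<tau> * Tcoef nu i \<tau> (swap_tab i \<tau>) =
     (tt * tpow (content \<tau> i) - tpow (content \<tau> (Suc i))) * (tpow (content \<tau> i) - tt * tpow (content \<tau> (Suc i)))
       / (tpow (content \<tau> i) - tpow (content \<tau> (Suc i)))^2"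
proof -
  let ?c1 = "content \<tau> i" and ?c2 = "content \<tau> (Suc i)"
  let ?a = "tpow ?c1" and ?b = "tpow ?c2"
  have ne: "swap_tab i \<tau> \<noteq> \<tau>" using swap_neq[OF t i] .
  have ne2: "swap_tab i (swap_tab i \<tau>) \<noteq> swap_tab i \<tau>" using ne by simp
  have r: "Tcoef nu i (swap_tab i \<tau>) \<tau> = (if ?c2 - ?c1 > 1 then 1 else Pc ?a ?b)"
    using Tc_off[OF t ne] .
  have s0: "Tcoef nu i (swap_tab i (swap_tab i \<tau>)) (swap_tab i \<tau>) = (if ?c1 - ?c2 > 1 then 1 else Pc ?b ?a)"
    using Tc_off[OF s ne2] by simp
  have pc: "Pc ?b ?a = Pc ?a ?b" unfolding Pc_def by (simp add: power2_eq_square algebra_simps)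
  have cne: "?c1 \<noteq> ?c2" using content_neq[OF t i] .
  have z: "\<not> ?c2 - ?c1 > 1 \<Longrightarrow> \<not> ?c1 - ?c2 > 1 \<Longrightarrow> Pc ?a ?b = 0"
  proof -
    assume "\<not> ?c2 - ?c1 > 1" "\<not> ?c1 - ?c2 > 1"
    hence "?c2 = ?c1 + 1 \<or> ?c1 = ?c2 + 1" using cne by linarith
    hence "?b = tt * ?a \<or> ?a = tt * ?b"
    proof (elim disjE)
      assume h: "?c2 = ?c1 + 1"
      show ?thesis unfolding h tpow_Suc by simp
    next
      assume h: "?c1 = ?c2 + 1"
      show ?thesis unfolding h tpow_Suc by simp
    qed
    thus "Pc ?a ?b = 0" unfolding Pc_def by auto
  qed
  show ?thesis using r s0 pc z cne unfolding Pc_def[symmetric] by (auto split: if_splits)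
qed

lemma ST_quad:
  assumes g: "SYTsupp nu g" and i: "1 \<le> i" "Suc i \<le> sum_list nu"
  shows "ST nu i (ST nu i g) \<tau> = (1 - tt) * ST nu i g \<tau> + tt * g \<tau>"
proof (cases "\<tau> \<in> SYT nu")
  case False thus ?thesis using g by (simp add: ST_out SYTsupp_def)
next
  case t: True
  let ?s = "swap_tab i \<tau>"
  let ?a = "tpow (content \<tau> i)" and ?b = "tpow (content \<tau> (Suc i))"
  have ab: "?a \<noteq> ?b" using ab_ne[OF t i] .
  have p: "Tcoef nu i \<tau> \<tau> = (1 - tt) * ?a / (?a - ?b)" by (rule Tc_diag)
  show ?thesis
  proof (cases "?s \<in> SYT nu")
    case s: True
    have p': "Tcoef nu i ?s ?s = (1 - tt) * ?b / (?b - ?a)" by (simp add: Tc_diag)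
    have e1: "ST nu i g \<tau> = Tcoef nu i \<tau> \<tau> * g \<tau> + Tcoef nu i ?s \<tau> * g ?s"
      using ST_pt[OF t i] s by simp
    have e2: "ST nu i g ?s = Tcoef nu i ?s ?s * g ?s + Tcoef nu i \<tau> ?s * g \<tau>"
      using ST_pt[OF s i] t by simp
    have e3: "ST nu i (ST nu i g) \<tau> = Tcoef nu i \<tau> \<tau> * ST nu i g \<tau> + Tcoef nu i ?s \<tau> * ST nu i g ?s"
      using ST_pt[OF t i] s by simp
    show ?thesis unfolding e3 e1 e2
      by (rule alg_quad2[OF ab p p' blk_rs[OF t i s]])
  next
    case s: False
    have e1: "ST nu i g \<tau> = Tcoef nu i \<tau> \<tau> * g \<tau>" using ST_pt[OF t i] s by simp
    have e3: "ST nu i (ST nu i g) \<tau> = Tcoef nu i \<tau> \<tau> * ST nu i g \<tau>" using ST_pt[OF t i] s by simp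
    have c: "?b = tt * ?a \<or> ?a = tt * ?b" using blk_1[OF t i s] .
    show ?thesis unfolding e3 e1 by (rule alg_quad1[OF ab tpow_nz p c])
  qed
qed

lemma STinv_ST:
  assumes g: "SYTsupp nu g" and i: "1 \<le> i" "Suc i \<le> sum_list nu"
  shows "STinv nu i (ST nu i g) = g"
proof
  fix \<tau>
  show "STinv nu i (ST nu i g) \<tau> = g \<tau>"
    unfolding STinv_def ST_quad[OF g i] by (simp add: field_simps)
qed

lemma theta_step:
  assumes g: "SYTsupp nu g" and t: "\<tau> \<in> SYT nu" and i: "1 \<le> i" "Suc i \<le> sum_list nu"
  shows "tt * STinv nu i (\<lambda>\<sigma>. tpow (content \<sigma> i) * STinv nu i g \<sigma>) \<tau> = tpow (content \<tau> (Suc i)) * g \<tau>"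
proof -
  let ?s = "swap_tab i \<tau>"
  let ?a = "tpow (content \<tau> i)" and ?b = "tpow (content \<tau> (Suc i))"
  let ?h = "\<lambda>\<sigma>. tpow (content \<sigma> i) * STinv nu i g \<sigma>"
  have ab: "?a \<noteq> ?b" using ab_ne[OF t i] .
  have p: "Tcoef nu i \<tau> \<tau> = (1 - tt) * ?a / (?a - ?b)" by (rule Tc_diag)
  show ?thesis
  proof (cases "?s \<in> SYT nu")
    case s: True
    have p': "Tcoef nu i ?s ?s = (1 - tt) * ?b / (?b - ?a)" by (simp add: Tc_diag)
    have x1: "STinv nu i g \<tau> = ((Tcoef nu i \<tau> \<tau> + (tt - 1)) * g \<tau> + Tcoef nu i ?s \<tau> * g ?s) / tt"
      using STinv_pt[OF t i, of g] s by simp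
    have x2: "STinv nu i g ?s = ((Tcoef nu i ?s ?s + (tt - 1)) * g ?s + Tcoef nu i \<tau> ?s * g \<tau>) / tt"
      using STinv_pt[OF s i, of g] t by simp
    have y: "STinv nu i ?h \<tau> = ((Tcoef nu i \<tau> \<tau> + (tt - 1)) * (?a * STinv nu i g \<tau>) + Tcoef nu i ?s \<tau> * (?b * STinv nu i g ?s)) / tt"
      using STinv_pt[OF t i, of ?h] s by simp
    show ?thesis unfolding y x1 x2
      by (rule alg_th2[OF ab tt_nz p p' blk_rs[OF t i s]])
  next
    case s: False
    have x1: "STinv nu i g \<tau> = ((Tcoef nu i \<tau> \<tau> + (tt - 1)) * g \<tau>) / tt"
      using STinv_pt[OF t i, of g] s by simp
    have y: "STinv nu i ?h \<tau> = ((Tcoef nu i \<tau> \<tau> + (tt - 1)) * (?a * STinv nu i g \<tau>)) / tt"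
      using STinv_pt[OF t i, of ?h] s by simp
    show ?thesis unfolding y x1
      by (rule alg_th1[OF ab tpow_nz tt_nz p blk_1[OF t i s]])
  qed
qed

lemma theta_diag:
  assumes g: "SYTsupp nu g" and k: "Suc k \<le> sum_list nu" and t: "\<tau> \<in> SYT nu"
  shows "tt ^ k * STdown nu k (STup nu k g) \<tau> = tpow (content \<tau> (Suc k)) * g \<tau>"
  using g k t
proof (induct k arbitrary: g \<tau>)
  case 0
  have "1 \<in> {1..sum_list nu}" using 0 by simp
  hence "\<tau> 1 \<in> boxes nu" using SYT_box[OF 0(3)] by blast
  hence "(1, 1) \<in> boxes nu" using good_dc[OF good, of _ _ 1 1] box_ge1 by (metis prod.collapse order_refl)
  hence "\<tau> 1 = (1, 1)" using first_box[OF 0(3)] by blast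
  thus ?case by (simp add: content_def tpow_def)
next
  case (Suc k)
  let ?g2 = "STinv nu (Suc k) g"
  have g2: "SYTsupp nu ?g2" using STinv_supp[OF Suc(2)] .
  have eq: "STdown nu k (STup nu k ?g2) = (\<lambda>\<sigma>. tpow (content \<sigma> (Suc k)) * ?g2 \<sigma> / tt ^ k)"
  proof
    fix \<sigma>
    show "STdown nu k (STup nu k ?g2) \<sigma> = tpow (content \<sigma> (Suc k)) * ?g2 \<sigma> / tt ^ k"
    proof (cases "\<sigma> \<in> SYT nu")
      case True
      have "tt ^ k * STdown nu k (STup nu k ?g2) \<sigma> = tpow (content \<sigma> (Suc k)) * ?g2 \<sigma>"
        using Suc(1)[OF g2 _ True] Suc(3) by simp
      thus ?thesis by (simp add: field_simps)
    next
      case False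
      thus ?thesis using STdown_supp[OF STup_supp[OF g2]] g2 by (simp add: SYTsupp_def)
    qed
  qed
  have "tt ^ Suc k * STdown nu (Suc k) (STup nu (Suc k) g) \<tau>
      = tt ^ Suc k * STinv nu (Suc k) (\<lambda>\<sigma>. tpow (content \<sigma> (Suc k)) * ?g2 \<sigma> / tt ^ k) \<tau>"
    by (simp add: STup_Suc eq)
  also have "\<dots> = tt * STinv nu (Suc k) (\<lambda>\<sigma>. tpow (content \<sigma> (Suc k)) * ?g2 \<sigma>) \<tau>"
    by (simp add: STinv_scale)
  also have "\<dots> = tpow (content \<tau> (Suc (Suc k))) * g \<tau>"
    by (rule theta_step[OF Suc(2) Suc(4)]) (use Suc(3) in simp_all)
  finally show ?case .
qed

end


definition fs :: "mpol \<Rightarrow> bool" where "fs f \<longleftrightarrow> finite {\<alpha>. f \<alpha> \<noteq> 0}"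
definition mulD :: "nat \<Rightarrow> mpol \<Rightarrow> mpol" where
  "mulD i h = (\<lambda>\<alpha>. pX (Suc i) h \<alpha> - pX i h \<alpha>)"
definition sw :: "nat \<Rightarrow> (nat \<Rightarrow> nat) \<Rightarrow> (nat \<Rightarrow> nat)" where
  "sw i \<alpha> = \<alpha>(i := \<alpha> (Suc i), Suc i := \<alpha> i)"
definition dl :: "(nat \<Rightarrow> nat) \<Rightarrow> mpol" where "dl \<beta> = (\<lambda>\<alpha>. if \<alpha> = \<beta> then 1 else 0)"

lemma psw_sw: "psw i f \<alpha> = f (sw i \<alpha>)" by (simp add: psw_def sw_def)
lemma sw_sw [simp]: "sw i (sw i \<alpha>) = \<alpha>" by (rule ext) (simp add: sw_def)
lemma psw_psw [simp]: "psw i (psw i f) = f" by (rule ext) (simp add: psw_sw)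
lemma sw_i [simp]: "sw i \<alpha> i = \<alpha> (Suc i)" by (simp add: sw_def)
lemma sw_Si [simp]: "sw i \<alpha> (Suc i) = \<alpha> i" by (simp add: sw_def)
lemma sw_j [simp]: "j \<noteq> i \<Longrightarrow> j \<noteq> Suc i \<Longrightarrow> sw i \<alpha> j = \<alpha> j" by (simp add: sw_def)

lemma fs_0 [simp]: "fs (\<lambda>_. 0)" by (simp add: fs_def)
lemma fs_add: "fs f \<Longrightarrow> fs g \<Longrightarrow> fs (\<lambda>\<alpha>. f \<alpha> + g \<alpha>)"
  unfolding fs_def by (rule finite_subset[of _ "{\<alpha>. f \<alpha> \<noteq> 0} \<union> {\<alpha>. g \<alpha> \<noteq> 0}"]) auto
lemma fs_lin: "fs f \<Longrightarrow> fs g \<Longrightarrow> fs (\<lambda>\<alpha>. c * f \<alpha> + d * g \<alpha>)"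
  unfolding fs_def by (rule finite_subset[of _ "{\<alpha>. f \<alpha> \<noteq> 0} \<union> {\<alpha>. g \<alpha> \<noteq> 0}"]) auto
lemma fs_scale: "fs f \<Longrightarrow> fs (\<lambda>\<alpha>. c * f \<alpha>)"
  unfolding fs_def by (rule finite_subset[of _ "{\<alpha>. f \<alpha> \<noteq> 0}"]) auto
lemma fs_sub: "fs f \<Longrightarrow> fs g \<Longrightarrow> fs (\<lambda>\<alpha>. f \<alpha> - g \<alpha>)"
  unfolding fs_def by (rule finite_subset[of _ "{\<alpha>. f \<alpha> \<noteq> 0} \<union> {\<alpha>. g \<alpha> \<noteq> 0}"]) auto
lemma fs_dl: "fs (dl \<beta>)" unfolding fs_def dl_def by (rule finite_subset[of _ "{\<beta>}"]) auto
lemma fs_sum: "finite A \<Longrightarrow> (\<And>a. a \<in> A \<Longrightarrow> fs (F a)) \<Longrightarrow> fs (\<lambda>\<alpha>. \<Sum>a\<in>A. F a \<alpha>)"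
proof (induct A rule: finite_induct)
  case empty thus ?case by simp
next
  case (insert x A) thus ?case using fs_add[of "F x" "\<lambda>\<alpha>. \<Sum>a\<in>A. F a \<alpha>"] by simp
qed

lemma fs_pX: "fs h \<Longrightarrow> fs (pX j h)"
  unfolding fs_def
proof (rule finite_subset[of _ "(\<lambda>\<beta>. \<beta>(j := Suc (\<beta> j))) ` {\<alpha>. h \<alpha> \<noteq> 0}"])
  show "{\<alpha>. pX j h \<alpha> \<noteq> 0} \<subseteq> (\<lambda>\<beta>. \<beta>(j := Suc (\<beta> j))) ` {\<alpha>. h \<alpha> \<noteq> 0}"
  proof
    fix \<alpha> assume "\<alpha> \<in> {\<alpha>. pX j h \<alpha> \<noteq> 0}"
    hence a: "\<alpha> j \<noteq> 0" "h (\<alpha>(j := \<alpha> j - 1)) \<noteq> 0" by (auto simp: pX_def split: if_splits)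
    have "\<alpha> = (\<alpha>(j := \<alpha> j - 1))(j := Suc ((\<alpha>(j := \<alpha> j - 1)) j))" using a(1) by (auto simp: fun_eq_iff)
    thus "\<alpha> \<in> (\<lambda>\<beta>. \<beta>(j := Suc (\<beta> j))) ` {\<alpha>. h \<alpha> \<noteq> 0}" using a(2) by blast
  qed
qed simp

lemma fs_psw: "fs f \<Longrightarrow> fs (psw i f)"
  unfolding fs_def
proof (rule finite_subset[of _ "sw i ` {\<alpha>. f \<alpha> \<noteq> 0}"])
  show "{\<alpha>. psw i f \<alpha> \<noteq> 0} \<subseteq> sw i ` {\<alpha>. f \<alpha> \<noteq> 0}"
  proof
    fix \<alpha> assume "\<alpha> \<in> {\<alpha>. psw i f \<alpha> \<noteq> 0}"
    hence "f (sw i \<alpha>) \<noteq> 0" by (simp add: psw_sw)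
    moreover have "\<alpha> = sw i (sw i \<alpha>)" by simp
    ultimately show "\<alpha> \<in> sw i ` {\<alpha>. f \<alpha> \<noteq> 0}" by blast
  qed
qed simp

lemma pX_dl: "pX j (dl \<gamma>) = dl (\<gamma>(j := Suc (\<gamma> j)))"
proof
  fix \<alpha>
  show "pX j (dl \<gamma>) \<alpha> = dl (\<gamma>(j := Suc (\<gamma> j))) \<alpha>"
  proof (cases "\<alpha> = \<gamma>(j := Suc (\<gamma> j))")
    case True thus ?thesis by (simp add: pX_def dl_def)
  next
    case False
    have "\<alpha> j \<noteq> 0 \<Longrightarrow> \<alpha>(j := \<alpha> j - 1) \<noteq> \<gamma>"
    proof
      assume "\<alpha> j \<noteq> 0" "\<alpha>(j := \<alpha> j - 1) = \<gamma>"
      hence "\<alpha> = \<gamma>(j := Suc (\<gamma> j))" by (auto simp: fun_eq_iff split: if_splits)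
      thus False using False by simp
    qed
    thus ?thesis using False by (auto simp: pX_def dl_def)
  qed
qed

lemma mulD_lin: "mulD i (\<lambda>\<alpha>. c * f \<alpha> + d * g \<alpha>) = (\<lambda>\<alpha>. c * mulD i f \<alpha> + d * mulD i g \<alpha>)"
  by (rule ext) (simp add: mulD_def pX_def algebra_simps)

lemma mulD_zero:
  assumes h: "fs h" and z: "mulD i h = (\<lambda>_. 0)"
  shows "h = (\<lambda>_. 0)"
proof (rule ccontr)
  assume ne: "h \<noteq> (\<lambda>_. 0)"
  let ?S = "{\<alpha>. h \<alpha> \<noteq> 0}"
  have fin: "finite ?S" using h by (simp add: fs_def)
  have Sne: "?S \<noteq> {}" using ne by auto
  let ?M = "Max ((\<lambda>\<alpha>. \<alpha> (Suc i)) ` ?S)"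
  have "?M \<in> (\<lambda>\<alpha>. \<alpha> (Suc i)) ` ?S" using fin Sne by (intro Max_in) auto
  then obtain \<alpha> where a: "h \<alpha> \<noteq> 0" "\<alpha> (Suc i) = ?M" by auto
  have maxp: "\<And>\<gamma>. h \<gamma> \<noteq> 0 \<Longrightarrow> \<gamma> (Suc i) \<le> ?M" using fin by (intro Max_ge) auto
  let ?b = "\<alpha>(Suc i := Suc (\<alpha> (Suc i)))"
  have p1: "pX (Suc i) h ?b = h \<alpha>"
  proof -
    have "?b(Suc i := ?b (Suc i) - 1) = \<alpha>" by (simp add: fun_eq_iff)
    thus ?thesis by (simp add: pX_def)
  qed
  have p2: "pX i h ?b = 0"
  proof (cases "\<alpha> i = 0")
    case True thus ?thesis by (simp add: pX_def)
  next
    case False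
    let ?g = "?b(i := ?b i - 1)"
    have "?g (Suc i) = Suc ?M" using a(2) by simp
    hence "h ?g = 0" using maxp[of ?g] by (cases "h ?g = 0") auto
    thus ?thesis by (simp add: pX_def)
  qed
  have "mulD i h ?b = h \<alpha>" using p1 p2 by (simp add: mulD_def)
  moreover have "mulD i h ?b = 0" using z by simp
  ultimately show False using a(1) by simp
qed

lemma mulD_uniq:
  assumes "fs h1" "fs h2" "mulD i h1 = mulD i h2"
  shows "h1 = h2"
proof -
  have "mulD i (\<lambda>\<alpha>. 1 * h1 \<alpha> + (-1) * h2 \<alpha>) = (\<lambda>_. 0)"
    unfolding mulD_lin using assms(3) by simp
  hence "(\<lambda>\<alpha>. 1 * h1 \<alpha> + (-1) * h2 \<alpha>) = (\<lambda>_. 0)"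
    using mulD_zero fs_lin[OF assms(1,2)] by blast
  thus ?thesis by (auto simp: fun_eq_iff)
qed

definition Dv :: "nat \<Rightarrow> mpol \<Rightarrow> bool" where
  "Dv i g \<longleftrightarrow> (\<exists>h. fs h \<and> mulD i h = g)"

lemma Dv_lin: "Dv i f \<Longrightarrow> Dv i g \<Longrightarrow> Dv i (\<lambda>\<alpha>. c * f \<alpha> + d * g \<alpha>)"
proof -
  assume "Dv i f" "Dv i g"
  then obtain h1 h2 where h: "fs h1" "mulD i h1 = f" "fs h2" "mulD i h2 = g" unfolding Dv_def by blast
  have "fs (\<lambda>\<alpha>. c * h1 \<alpha> + d * h2 \<alpha>)" using fs_lin[OF h(1,3)] .
  moreover have "mulD i (\<lambda>\<alpha>. c * h1 \<alpha> + d * h2 \<alpha>) = (\<lambda>\<alpha>. c * f \<alpha> + d * g \<alpha>)"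
    unfolding mulD_lin h(2,4) ..
  ultimately show ?thesis unfolding Dv_def by blast
qed

lemma pX_scale: "pX j (\<lambda>\<alpha>. c * f \<alpha>) = (\<lambda>\<alpha>. c * pX j f \<alpha>)"
  by (rule ext) (simp add: pX_def)

lemma Dv_step:
  assumes "\<alpha> i > 0"
  shows "Dv i (\<lambda>x. dl \<alpha> x - dl (\<alpha>(i := \<alpha> i - 1, Suc i := Suc (\<alpha> (Suc i)))) x)"
proof -
  let ?g = "\<alpha>(i := \<alpha> i - 1)"
  have e1: "?g(i := Suc (?g i)) = \<alpha>" using assms by (auto simp: fun_eq_iff)
  have e2: "?g(Suc i := Suc (?g (Suc i))) = \<alpha>(i := \<alpha> i - 1, Suc i := Suc (\<alpha> (Suc i)))"
    by (auto simp: fun_eq_iff)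
  have x1: "pX (Suc i) (\<lambda>x. (-1) * dl ?g x) = (\<lambda>x. (-1) * dl (\<alpha>(i := \<alpha> i - 1, Suc i := Suc (\<alpha> (Suc i)))) x)"
    unfolding pX_scale pX_dl e2 ..
  have x2: "pX i (\<lambda>x. (-1) * dl ?g x) = (\<lambda>x. (-1) * dl \<alpha> x)"
    unfolding pX_scale pX_dl e1 ..
  have "mulD i (\<lambda>x. (-1) * dl ?g x) = (\<lambda>x. dl \<alpha> x - dl (\<alpha>(i := \<alpha> i - 1, Suc i := Suc (\<alpha> (Suc i)))) x)"
    unfolding mulD_def x1 x2 by simp
  moreover have "fs (\<lambda>x. (-1) * dl ?g x)" using fs_scale[OF fs_dl] .
  ultimately show ?thesis unfolding Dv_def by blast
qed


lemma pX_zero [simp]: "pX j (\<lambda>_. 0) = (\<lambda>_. 0)" by (rule ext) (simp add: pX_def)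
lemma mulD_zero0 [simp]: "mulD i (\<lambda>_. 0) = (\<lambda>_. 0)" by (rule ext) (simp add: mulD_def)

lemma Dv_zero: "Dv i (\<lambda>_. 0)"
  unfolding Dv_def by (rule exI[of _ "\<lambda>_. 0"]) simp

lemma Dv_cong: "Dv i f \<Longrightarrow> f = g \<Longrightarrow> Dv i g" by simp

lemma myl: "(a::K) - b + (b - c) = a - c" by simp

lemma Dv_chain:
  "k \<le> \<alpha> i \<Longrightarrow> Dv i (\<lambda>x. dl \<alpha> x - dl (\<alpha>(i := \<alpha> i - k, Suc i := \<alpha> (Suc i) + k)) x)"
proof (induct k)
  case 0
  have "\<alpha>(i := \<alpha> i - 0, Suc i := \<alpha> (Suc i) + 0) = \<alpha>" by (simp add: fun_eq_iff)
  thus ?case using Dv_zero by simp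
next
  case (Suc k)
  let ?b = "\<alpha>(i := \<alpha> i - k, Suc i := \<alpha> (Suc i) + k)"
  have bi: "?b i > 0" using Suc(2) by simp
  have e: "?b(i := ?b i - 1, Suc i := Suc (?b (Suc i))) = \<alpha>(i := \<alpha> i - Suc k, Suc i := \<alpha> (Suc i) + Suc k)"
    by (simp add: fun_eq_iff)
  have kk: "k \<le> \<alpha> i" using Suc(2) by simp
  have d1: "Dv i (\<lambda>x. dl \<alpha> x - dl ?b x)" by (rule Suc(1)[OF kk])
  have d2: "Dv i (\<lambda>x. dl ?b x - dl (\<alpha>(i := \<alpha> i - Suc k, Suc i := \<alpha> (Suc i) + Suc k)) x)"
    using Dv_step[of ?b i, OF bi] unfolding e .
  show ?case using Dv_lin[OF d1 d2, of 1 1] by (rule Dv_cong) (rule ext, simp only: mult_1_left myl)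
qed

lemma Dv_sw: "Dv i (\<lambda>x. dl \<alpha> x - dl (sw i \<alpha>) x)"
proof (cases "\<alpha> (Suc i) \<le> \<alpha> i")
  case True
  have "\<alpha>(i := \<alpha> i - (\<alpha> i - \<alpha> (Suc i)), Suc i := \<alpha> (Suc i) + (\<alpha> i - \<alpha> (Suc i))) = sw i \<alpha>"
    using True by (simp add: fun_eq_iff sw_def)
  thus ?thesis using Dv_chain[of "\<alpha> i - \<alpha> (Suc i)" \<alpha> i] by simp
next
  case False
  let ?b = "sw i \<alpha>"
  have "?b(i := ?b i - (?b i - ?b (Suc i)), Suc i := ?b (Suc i) + (?b i - ?b (Suc i))) = sw i ?b"
    using False by (simp add: fun_eq_iff sw_def)
  hence d: "Dv i (\<lambda>x. dl ?b x - dl \<alpha> x)" using Dv_chain[of "?b i - ?b (Suc i)" ?b i] by simp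
  show ?thesis using Dv_lin[OF d d, of "-1" 0] by (rule Dv_cong) (simp add: fun_eq_iff)
qed

lemma Dv_exist_aux:
  "finite S \<Longrightarrow> \<forall>f. {\<alpha>. f \<alpha> \<noteq> 0} \<subseteq> S \<longrightarrow> Dv i (\<lambda>\<alpha>. f \<alpha> - psw i f \<alpha>)"
proof (induct S rule: finite_induct)
  case empty
  show ?case
  proof (intro allI impI)
    fix f :: mpol assume "{\<alpha>. f \<alpha> \<noteq> 0} \<subseteq> {}"
    hence "f = (\<lambda>_. 0)" by (auto simp: fun_eq_iff)
    thus "Dv i (\<lambda>\<alpha>. f \<alpha> - psw i f \<alpha>)" using Dv_zero by (simp add: psw_sw)
  qed
next
  case (insert a S)
  show ?case
  proof (intro allI impI)
    fix f :: mpol assume fS: "{\<alpha>. f \<alpha> \<noteq> 0} \<subseteq> insert a S"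
    let ?f' = "f(a := 0)"
    have "{\<alpha>. ?f' \<alpha> \<noteq> 0} \<subseteq> S" using fS by auto
    hence d1: "Dv i (\<lambda>\<alpha>. ?f' \<alpha> - psw i ?f' \<alpha>)" using insert(3) by blast
    have d2: "Dv i (\<lambda>x. dl a x - dl (sw i a) x)" by (rule Dv_sw)
    have eq: "(\<lambda>\<alpha>. 1 * (?f' \<alpha> - psw i ?f' \<alpha>) + f a * (dl a \<alpha> - dl (sw i a) \<alpha>)) = (\<lambda>\<alpha>. f \<alpha> - psw i f \<alpha>)"
    proof
      fix x
      have "(sw i x = a) = (x = sw i a)" by (metis sw_sw)
      thus "1 * (?f' x - psw i ?f' x) + f a * (dl a x - dl (sw i a) x) = f x - psw i f x"
        by (auto simp: psw_sw dl_def algebra_simps)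
    qed
    show "Dv i (\<lambda>\<alpha>. f \<alpha> - psw i f \<alpha>)" using Dv_lin[OF d1 d2, of 1 "f a"] eq by simp
  qed
qed

lemma Dv_exist: "fs f \<Longrightarrow> Dv i (\<lambda>\<alpha>. f \<alpha> - psw i f \<alpha>)"
  using Dv_exist_aux[of "{\<alpha>. f \<alpha> \<noteq> 0}" i] unfolding fs_def by blast

lemma pD_char:
  assumes f: "fs f" and h: "fs h" and e: "mulD i h = (\<lambda>\<alpha>. f \<alpha> - psw i f \<alpha>)"
  shows "pD i f = pX i h"
proof -
  have "(THE h. finite {\<alpha>. h \<alpha> \<noteq> 0} \<and> (\<lambda>\<alpha>. pX (Suc i) h \<alpha> - pX i h \<alpha>) = (\<lambda>\<alpha>. f \<alpha> - psw i f \<alpha>)) = h"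
  proof (rule the_equality)
    show "finite {\<alpha>. h \<alpha> \<noteq> 0} \<and> (\<lambda>\<alpha>. pX (Suc i) h \<alpha> - pX i h \<alpha>) = (\<lambda>\<alpha>. f \<alpha> - psw i f \<alpha>)"
      using h e by (simp add: fs_def mulD_def)
  next
    fix h' assume "finite {\<alpha>. h' \<alpha> \<noteq> 0} \<and> (\<lambda>\<alpha>. pX (Suc i) h' \<alpha> - pX i h' \<alpha>) = (\<lambda>\<alpha>. f \<alpha> - psw i f \<alpha>)"
    hence "fs h'" "mulD i h' = mulD i h" using e by (simp_all add: fs_def mulD_def)
    thus "h' = h" using mulD_uniq h by blast
  qed
  thus ?thesis by (simp add: pD_def)
qed

lemma pD_obtain:
  assumes f: "fs f"
  obtains h where "fs h" "mulD i h = (\<lambda>\<alpha>. f \<alpha> - psw i f \<alpha>)" "pD i f = pX i h"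
  using Dv_exist[OF f, of i] pD_char[OF f] unfolding Dv_def by blast

lemma pD_local0: "\<alpha> i = 0 \<Longrightarrow> pD i f \<alpha> = 0"
  by (simp add: pD_def pX_def)

lemma pD_local1:
  assumes f: "fs f" and a: "\<alpha> (Suc i) = 0"
  shows "pD i f \<alpha> = psw i f \<alpha> - f \<alpha>"
proof -
  obtain h where h: "fs h" "mulD i h = (\<lambda>\<alpha>. f \<alpha> - psw i f \<alpha>)" "pD i f = pX i h"
    using pD_obtain[OF f] by blast
  have "mulD i h \<alpha> = - pX i h \<alpha>" using a by (simp add: mulD_def pX_def)
  thus ?thesis using h(2,3) by (metis add_diff_cancel_left' diff_0 minus_diff_eq diff_add_cancel)
qed

lemma fs_pD: "fs f \<Longrightarrow> fs (pD i f)"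
  using pD_obtain fs_pX by metis

lemma pD_zero [simp]: "pD i (\<lambda>_. 0) = (\<lambda>_. 0)"
  using pD_char[of "\<lambda>_. 0" "\<lambda>_. 0" i] by (simp add: psw_def)

lemma pX_lin: "pX j (\<lambda>\<alpha>. c * f \<alpha> + d * g \<alpha>) = (\<lambda>\<alpha>. c * pX j f \<alpha> + d * pX j g \<alpha>)"
  by (rule ext) (simp add: pX_def)

lemma pD_lin:
  assumes f: "fs f" and g: "fs g"
  shows "pD i (\<lambda>\<alpha>. c * f \<alpha> + d * g \<alpha>) = (\<lambda>\<alpha>. c * pD i f \<alpha> + d * pD i g \<alpha>)"
proof -
  obtain h1 where h1: "fs h1" "mulD i h1 = (\<lambda>\<alpha>. f \<alpha> - psw i f \<alpha>)" "pD i f = pX i h1"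
    using pD_obtain[OF f] by blast
  obtain h2 where h2: "fs h2" "mulD i h2 = (\<lambda>\<alpha>. g \<alpha> - psw i g \<alpha>)" "pD i g = pX i h2"
    using pD_obtain[OF g] by blast
  have e: "mulD i (\<lambda>\<alpha>. c * h1 \<alpha> + d * h2 \<alpha>) =
     (\<lambda>\<alpha>. (c * f \<alpha> + d * g \<alpha>) - psw i (\<lambda>\<alpha>. c * f \<alpha> + d * g \<alpha>) \<alpha>)"
    unfolding mulD_lin h1(2) h2(2) by (rule ext) (simp add: psw_sw algebra_simps)
  have "pD i (\<lambda>\<alpha>. c * f \<alpha> + d * g \<alpha>) = pX i (\<lambda>\<alpha>. c * h1 \<alpha> + d * h2 \<alpha>)"
    by (rule pD_char[OF fs_lin[OF f g] fs_lin[OF h1(1) h2(1)] e])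
  thus ?thesis unfolding pX_lin h1(3) h2(3) .
qed

lemma pD_sum:
  "finite A \<Longrightarrow> (\<And>a. a \<in> A \<Longrightarrow> fs (F a)) \<Longrightarrow>
   pD i (\<lambda>\<alpha>. \<Sum>a\<in>A. F a \<alpha>) = (\<lambda>\<alpha>. \<Sum>a\<in>A. pD i (F a) \<alpha>)"
proof (induct A rule: finite_induct)
  case empty thus ?case by simp
next
  case (insert x A)
  have f1: "fs (F x)" using insert by simp
  have f2: "fs (\<lambda>\<alpha>. \<Sum>a\<in>A. F a \<alpha>)" using fs_sum[OF insert(1)] insert(4) by simp
  have "pD i (\<lambda>\<alpha>. \<Sum>a\<in>insert x A. F a \<alpha>) = pD i (\<lambda>\<alpha>. 1 * F x \<alpha> + 1 * (\<Sum>a\<in>A. F a \<alpha>))"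
    using insert(1,2) by simp
  also have "\<dots> = (\<lambda>\<alpha>. 1 * pD i (F x) \<alpha> + 1 * pD i (\<lambda>\<alpha>. \<Sum>a\<in>A. F a \<alpha>) \<alpha>)"
    by (rule pD_lin[OF f1 f2])
  also have "\<dots> = (\<lambda>\<alpha>. \<Sum>a\<in>insert x A. pD i (F a) \<alpha>)"
    using insert by simp
  finally show ?case .
qed

lemma psw_pX_i: "psw i (pX i h) = pX (Suc i) (psw i h)"
proof
  fix \<alpha>
  have "(sw i \<alpha>)(i := sw i \<alpha> i - 1) = sw i (\<alpha>(Suc i := \<alpha> (Suc i) - 1))"
    by (simp add: fun_eq_iff sw_def)
  thus "psw i (pX i h) \<alpha> = pX (Suc i) (psw i h) \<alpha>" by (simp add: psw_sw pX_def)
qed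

lemma psw_pX_Si: "psw i (pX (Suc i) h) = pX i (psw i h)"
proof
  fix \<alpha>
  have "(sw i \<alpha>)(Suc i := sw i \<alpha> (Suc i) - 1) = sw i (\<alpha>(i := \<alpha> i - 1))"
    by (simp add: fun_eq_iff sw_def)
  thus "psw i (pX (Suc i) h) \<alpha> = pX i (psw i h) \<alpha>" by (simp add: psw_sw pX_def)
qed

lemma psw_h:
  assumes f: "fs f" and h: "fs h" and e: "mulD i h = (\<lambda>\<alpha>. f \<alpha> - psw i f \<alpha>)"
  shows "psw i h = h"
proof (rule mulD_uniq[OF fs_psw[OF h] h])
  show "mulD i (psw i h) = mulD i h"
  proof
    fix \<alpha>
    have "mulD i (psw i h) \<alpha> = psw i (pX i h) \<alpha> - psw i (pX (Suc i) h) \<alpha>"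
      by (simp add: mulD_def psw_pX_i psw_pX_Si)
    also have "\<dots> = - mulD i h (sw i \<alpha>)" by (simp add: mulD_def psw_sw)
    also have "\<dots> = mulD i h \<alpha>" unfolding e by (simp add: psw_sw)
    finally show "mulD i (psw i h) \<alpha> = mulD i h \<alpha>" .
  qed
qed

lemma pD_psw:
  assumes f: "fs f"
  shows "pD i (psw i f) = (\<lambda>\<alpha>. - pD i f \<alpha>)"
proof -
  obtain h where h: "fs h" "mulD i h = (\<lambda>\<alpha>. f \<alpha> - psw i f \<alpha>)" "pD i f = pX i h"
    using pD_obtain[OF f] by blast
  have e: "mulD i (\<lambda>\<alpha>. (-1) * h \<alpha> + 0 * h \<alpha>) = (\<lambda>\<alpha>. psw i f \<alpha> - psw i (psw i f) \<alpha>)"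
    unfolding mulD_lin h(2) by simp
  have "pD i (psw i f) = pX i (\<lambda>\<alpha>. (-1) * h \<alpha> + 0 * h \<alpha>)"
    by (rule pD_char[OF fs_psw[OF f] fs_lin[OF h(1) h(1)] e])
  thus ?thesis unfolding pX_lin h(3) by simp
qed

lemma psw_pD:
  assumes f: "fs f"
  shows "psw i (pD i f) = (\<lambda>\<alpha>. f \<alpha> - psw i f \<alpha> + pD i f \<alpha>)"
proof -
  obtain h where h: "fs h" "mulD i h = (\<lambda>\<alpha>. f \<alpha> - psw i f \<alpha>)" "pD i f = pX i h"
    using pD_obtain[OF f] by blast
  have "psw i (pD i f) = pX (Suc i) h" unfolding h(3) psw_pX_i psw_h[OF f h(1,2)] ..
  also have "\<dots> = (\<lambda>\<alpha>. f \<alpha> - psw i f \<alpha> + pD i f \<alpha>)"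
  proof
    fix \<alpha>
    have "mulD i h \<alpha> = f \<alpha> - psw i f \<alpha>" using h(2) by simp
    thus "pX (Suc i) h \<alpha> = f \<alpha> - psw i f \<alpha> + pD i f \<alpha>" unfolding h(3) mulD_def by simp
  qed
  finally show ?thesis .
qed

lemma pD_pD:
  assumes f: "fs f"
  shows "pD i (pD i f) = (\<lambda>\<alpha>. - pD i f \<alpha>)"
proof -
  obtain h where h: "fs h" "mulD i h = (\<lambda>\<alpha>. f \<alpha> - psw i f \<alpha>)" "pD i f = pX i h"
    using pD_obtain[OF f] by blast
  have e: "mulD i (\<lambda>\<alpha>. (-1) * h \<alpha> + 0 * h \<alpha>) = (\<lambda>\<alpha>. pD i f \<alpha> - psw i (pD i f) \<alpha>)"
    unfolding mulD_lin psw_pD[OF f] h(2) by simp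
  have "pD i (pD i f) = pX i (\<lambda>\<alpha>. (-1) * h \<alpha> + 0 * h \<alpha>)"
    by (rule pD_char[OF fs_pD[OF f] fs_lin[OF h(1) h(1)] e])
  thus ?thesis unfolding pX_lin h(3) by simp
qed

definition slice :: "nat \<Rightarrow> mpol \<Rightarrow> mpol" where
  "slice j f = (\<lambda>\<alpha>. if \<alpha> j = 0 then f \<alpha> else 0)"

lemma fs_slice: "fs f \<Longrightarrow> fs (slice j f)"
  unfolding fs_def slice_def by (rule finite_subset[of _ "{\<alpha>. f \<alpha> \<noteq> 0}"]) auto

lemma pX_slice: "k \<noteq> j \<Longrightarrow> pX k (slice j h) = slice j (pX k h)"
  by (rule ext) (simp add: pX_def slice_def)

lemma psw_slice: "j \<noteq> i \<Longrightarrow> j \<noteq> Suc i \<Longrightarrow> psw i (slice j h) = slice j (psw i h)"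
  by (rule ext) (simp add: psw_sw slice_def)

lemma pD_slice:
  assumes f: "fs f" and j: "j \<noteq> i" "j \<noteq> Suc i"
  shows "pD i (slice j f) = slice j (pD i f)"
proof -
  obtain h where h: "fs h" "mulD i h = (\<lambda>\<alpha>. f \<alpha> - psw i f \<alpha>)" "pD i f = pX i h"
    using pD_obtain[OF f] by blast
  have e: "mulD i (slice j h) = (\<lambda>\<alpha>. slice j f \<alpha> - psw i (slice j f) \<alpha>)"
  proof
    fix \<alpha>
    have s1: "pX (Suc i) (slice j h) = slice j (pX (Suc i) h)" using pX_slice j by metis
    have s2: "pX i (slice j h) = slice j (pX i h)" using pX_slice j by metis
    have "mulD i (slice j h) \<alpha> = slice j (mulD i h) \<alpha>"
      unfolding mulD_def s1 s2 by (simp add: slice_def)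
    thus "mulD i (slice j h) \<alpha> = slice j f \<alpha> - psw i (slice j f) \<alpha>"
      unfolding h(2) psw_slice[OF j] by (simp add: slice_def)
  qed
  have "pD i (slice j f) = pX i (slice j h)" by (rule pD_char[OF fs_slice[OF f] fs_slice[OF h(1)] e])
  thus ?thesis unfolding h(3) using pX_slice j by metis
qed


definition Wv :: "nat list \<Rightarrow> vec \<Rightarrow> bool" where
  "Wv nu v \<longleftrightarrow> (\<forall>\<tau>. fs (v \<tau>)) \<and> (\<forall>\<tau>. \<tau> \<notin> SYT nu \<longrightarrow> v \<tau> = (\<lambda>_. 0))"

lemma Wv_fs: "Wv nu v \<Longrightarrow> fs (v \<tau>)" by (simp add: Wv_def)
lemma Wv_out: "Wv nu v \<Longrightarrow> \<tau> \<notin> SYT nu \<Longrightarrow> v \<tau> \<alpha> = 0" by (simp add: Wv_def)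
lemma Wv_supp: "Wv nu v \<Longrightarrow> SYTsupp nu (\<lambda>\<sigma>. v \<sigma> \<alpha>)" by (simp add: Wv_def SYTsupp_def)

lemma Vspace_Wv: "v \<in> Vspace nu \<Longrightarrow> Wv nu v"
proof -
  assume v: "v \<in> Vspace nu"
  have fin: "finite {(\<tau>, \<alpha>). v \<tau> \<alpha> \<noteq> 0}" and sup: "\<forall>\<tau> \<alpha>. v \<tau> \<alpha> \<noteq> 0 \<longrightarrow> \<tau> \<in> SYT nu"
    using v unfolding Vspace_def by blast+
  have "fs (v \<tau>)" for \<tau>
  proof -
    have "{\<alpha>. v \<tau> \<alpha> \<noteq> 0} \<subseteq> snd ` {(\<tau>, \<alpha>). v \<tau> \<alpha> \<noteq> 0}" by force
    thus ?thesis unfolding fs_def using fin finite_subset by blast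
  qed
  moreover have "\<tau> \<notin> SYT nu \<Longrightarrow> v \<tau> = (\<lambda>_. 0)" for \<tau> using sup by auto
  ultimately show ?thesis unfolding Wv_def by blast
qed

lemma VT_ST: "VT nu i v \<tau> \<alpha> = ST nu i (\<lambda>\<sigma>. v \<sigma> (sw i \<alpha>)) \<tau> + (tt - 1) * pD i (v \<tau>) \<alpha>"
  by (simp add: VT_def ST_def psw_sw)

lemma VT_alt: "VT nu i v \<tau> = (\<lambda>\<alpha>. 1 * (\<Sum>\<sigma>\<in>SYT nu. Tcoef nu i \<sigma> \<tau> * psw i (v \<sigma>) \<alpha>) + (tt - 1) * pD i (v \<tau>) \<alpha>)"
  by (simp add: VT_def)

lemma pD_smult: "fs f \<Longrightarrow> pD i (\<lambda>\<alpha>. c * f \<alpha>) = (\<lambda>\<alpha>. c * pD i f \<alpha>)"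
  using pD_lin[of f f i c 0] by simp

lemma fs_VTsum: "Wv nu v \<Longrightarrow> fs (\<lambda>\<alpha>. \<Sum>\<sigma>\<in>SYT nu. Tcoef nu i \<sigma> \<tau> * psw i (v \<sigma>) \<alpha>)"
  by (rule fs_sum[OF finite_SYT]) (intro fs_scale fs_psw Wv_fs)

lemma Wv_VT: "Wv nu v \<Longrightarrow> Wv nu (VT nu i v)"
proof -
  assume w: "Wv nu v"
  have "fs (VT nu i v \<tau>)" for \<tau>
    unfolding VT_alt by (rule fs_lin[OF fs_VTsum[OF w] fs_pD[OF Wv_fs[OF w]]])
  moreover have "\<tau> \<notin> SYT nu \<Longrightarrow> VT nu i v \<tau> = (\<lambda>_. 0)" for \<tau>
  proof -
    assume t: "\<tau> \<notin> SYT nu"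
    hence z: "v \<tau> = (\<lambda>_. 0)" using w by (simp add: Wv_def)
    show ?thesis by (rule ext) (simp add: VT_ST ST_out t z)
  qed
  ultimately show ?thesis unfolding Wv_def by blast
qed

lemma Wv_lin: "Wv nu x \<Longrightarrow> Wv nu y \<Longrightarrow> Wv nu (\<lambda>\<tau> \<alpha>. c * x \<tau> \<alpha> + d * y \<tau> \<alpha>)"
  unfolding Wv_def using fs_lin by auto

lemma VTinv_alt: "VTinv nu i v = (\<lambda>\<tau> \<alpha>. (1 / tt) * VT nu i v \<tau> \<alpha> + ((tt - 1) / tt) * v \<tau> \<alpha>)"
  by (simp add: VTinv_def fun_eq_iff add_divide_distrib)

lemma Wv_VTinv: "Wv nu v \<Longrightarrow> Wv nu (VTinv nu i v)"
  unfolding VTinv_alt by (intro Wv_lin Wv_VT)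

lemma ST_lin: "ST nu i (\<lambda>\<sigma>. c * f \<sigma> + d * g \<sigma>) \<tau> = c * ST nu i f \<tau> + d * ST nu i g \<tau>"
  by (simp add: ST_def sum.distrib sum_distrib_left algebra_simps)

lemma VT_lin:
  assumes x: "Wv nu x" and y: "Wv nu y"
  shows "VT nu i (\<lambda>\<tau> \<alpha>. c * x \<tau> \<alpha> + d * y \<tau> \<alpha>) = (\<lambda>\<tau> \<alpha>. c * VT nu i x \<tau> \<alpha> + d * VT nu i y \<tau> \<alpha>)"
proof (intro ext)
  fix \<tau> \<alpha>
  have "pD i (\<lambda>\<alpha>. c * x \<tau> \<alpha> + d * y \<tau> \<alpha>) \<alpha> = c * pD i (x \<tau>) \<alpha> + d * pD i (y \<tau>) \<alpha>"
    using pD_lin[OF Wv_fs[OF x] Wv_fs[OF y]] by simp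
  thus "VT nu i (\<lambda>\<tau> \<alpha>. c * x \<tau> \<alpha> + d * y \<tau> \<alpha>) \<tau> \<alpha> = c * VT nu i x \<tau> \<alpha> + d * VT nu i y \<tau> \<alpha>"
    unfolding VT_ST ST_lin by (simp add: algebra_simps)
qed

lemma pD_VT:
  assumes w: "Wv nu v"
  shows "pD i (VT nu i v \<tau>) \<alpha> = - ST nu i (\<lambda>\<sigma>. pD i (v \<sigma>) \<alpha>) \<tau> - (tt - 1) * pD i (v \<tau>) \<alpha>"
proof -
  have "pD i (VT nu i v \<tau>) = (\<lambda>\<alpha>. 1 * pD i (\<lambda>\<alpha>. \<Sum>\<sigma>\<in>SYT nu. Tcoef nu i \<sigma> \<tau> * psw i (v \<sigma>) \<alpha>) \<alpha> + (tt - 1) * pD i (pD i (v \<tau>)) \<alpha>)"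
    unfolding VT_alt by (rule pD_lin[OF fs_VTsum[OF w] fs_pD[OF Wv_fs[OF w]]])
  also have "pD i (\<lambda>\<alpha>. \<Sum>\<sigma>\<in>SYT nu. Tcoef nu i \<sigma> \<tau> * psw i (v \<sigma>) \<alpha>) = (\<lambda>\<alpha>. \<Sum>\<sigma>\<in>SYT nu. pD i (\<lambda>\<alpha>. Tcoef nu i \<sigma> \<tau> * psw i (v \<sigma>) \<alpha>) \<alpha>)"
    by (rule pD_sum[OF finite_SYT]) (intro fs_scale fs_psw Wv_fs[OF w])
  also have "\<dots> = (\<lambda>\<alpha>. \<Sum>\<sigma>\<in>SYT nu. Tcoef nu i \<sigma> \<tau> * (- pD i (v \<sigma>) \<alpha>))"
    by (simp add: pD_smult fs_psw Wv_fs[OF w] pD_psw)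
  finally show ?thesis
    by (simp add: pD_pD[OF Wv_fs[OF w]] ST_def sum_negf algebra_simps)
qed

lemma VT_quad:
  assumes w: "Wv nu v" and g: "good nu" and i: "1 \<le> i" "Suc i \<le> sum_list nu"
  shows "VT nu i (VT nu i v) = (\<lambda>\<tau> \<alpha>. (1 - tt) * VT nu i v \<tau> \<alpha> + tt * v \<tau> \<alpha>)"
proof (intro ext)
  fix \<tau> \<alpha>
  interpret gnu nu using g by unfold_locales
  let ?g = "\<lambda>\<sigma>. v \<sigma> \<alpha>" and ?g' = "\<lambda>\<sigma>. v \<sigma> (sw i \<alpha>)" and ?d = "\<lambda>\<sigma>. pD i (v \<sigma>) \<alpha>"
  have e1: "VT nu i v \<sigma> (sw i \<alpha>) = ST nu i ?g \<sigma> + (tt - 1) * (v \<sigma> \<alpha> - v \<sigma> (sw i \<alpha>) + pD i (v \<sigma>) \<alpha>)" for \<sigma>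
  proof -
    have "pD i (v \<sigma>) (sw i \<alpha>) = psw i (pD i (v \<sigma>)) \<alpha>" by (simp add: psw_sw)
    thus ?thesis unfolding VT_ST sw_sw psw_pD[OF Wv_fs[OF w]] by (simp add: psw_sw)
  qed
  have "VT nu i (VT nu i v) \<tau> \<alpha> = ST nu i (\<lambda>\<sigma>. VT nu i v \<sigma> (sw i \<alpha>)) \<tau> + (tt - 1) * pD i (VT nu i v \<tau>) \<alpha>"
    by (rule VT_ST)
  also have "ST nu i (\<lambda>\<sigma>. VT nu i v \<sigma> (sw i \<alpha>)) \<tau> =
     ST nu i (ST nu i ?g) \<tau> + (tt - 1) * (ST nu i ?g \<tau> - ST nu i ?g' \<tau> + ST nu i ?d \<tau>)"
    unfolding e1 by (simp add: ST_def sum.distrib sum_distrib_left sum_subtractf algebra_simps)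
  also have "ST nu i (ST nu i ?g) \<tau> = (1 - tt) * ST nu i ?g \<tau> + tt * v \<tau> \<alpha>"
    by (rule ST_quad[OF Wv_supp[OF w] i])
  also have "pD i (VT nu i v \<tau>) \<alpha> = - ST nu i ?d \<tau> - (tt - 1) * pD i (v \<tau>) \<alpha>"
    by (rule pD_VT[OF w])
  finally show "VT nu i (VT nu i v) \<tau> \<alpha> = (1 - tt) * VT nu i v \<tau> \<alpha> + tt * v \<tau> \<alpha>"
    unfolding VT_ST[of nu i v \<tau> \<alpha>] by (simp add: algebra_simps)
qed

lemma VT_VTinv:
  assumes w: "Wv nu v" and g: "good nu" and i: "1 \<le> i" "Suc i \<le> sum_list nu"
  shows "VT nu i (VTinv nu i v) = v"
proof -
  have "VT nu i (VTinv nu i v) = (\<lambda>\<tau> \<alpha>. (1 / tt) * VT nu i (VT nu i v) \<tau> \<alpha> + ((tt - 1) / tt) * VT nu i v \<tau> \<alpha>)"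
    unfolding VTinv_alt by (rule VT_lin[OF Wv_VT[OF w] w])
  also have "\<dots> = v" unfolding VT_quad[OF w g i]
    by (intro ext) (simp add: field_simps)
  finally show ?thesis .
qed

lemma VTinv_lin:
  assumes x: "Wv nu x" and y: "Wv nu y"
  shows "VTinv nu i (\<lambda>\<tau> \<alpha>. c * x \<tau> \<alpha> + d * y \<tau> \<alpha>) = (\<lambda>\<tau> \<alpha>. c * VTinv nu i x \<tau> \<alpha> + d * VTinv nu i y \<tau> \<alpha>)"
  unfolding VTinv_def VT_lin[OF x y] by (intro ext) (simp add: field_simps)


lemma sum_lin3: "(\<Sum>\<sigma>\<in>A. c \<sigma> * ((X \<sigma> + d * Y \<sigma>) / t)) = ((\<Sum>\<sigma>\<in>A. c \<sigma> * X \<sigma>) + d * (\<Sum>\<sigma>\<in>A. c \<sigma> * Y \<sigma>)) / (t::K)"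
proof -
  have "(\<Sum>\<sigma>\<in>A. c \<sigma> * ((X \<sigma> + d * Y \<sigma>) / t)) = (\<Sum>\<sigma>\<in>A. (c \<sigma> * X \<sigma> + d * (c \<sigma> * Y \<sigma>)) / t)"
    by (rule sum.cong) (simp_all add: algebra_simps)
  also have "\<dots> = (\<Sum>\<sigma>\<in>A. c \<sigma> * X \<sigma> + d * (c \<sigma> * Y \<sigma>)) / t" by (simp add: sum_divide_distrib)
  also have "\<dots> = ((\<Sum>\<sigma>\<in>A. c \<sigma> * X \<sigma>) + d * (\<Sum>\<sigma>\<in>A. c \<sigma> * Y \<sigma>)) / t"
    by (simp add: sum.distrib sum_distrib_left)
  finally show ?thesis .
qed

lemma ST_sum:
  "ST nu i (\<lambda>\<rho>. \<Sum>\<sigma>\<in>A. c \<sigma> * F \<sigma> \<rho>) \<tau> = (\<Sum>\<sigma>\<in>A. c \<sigma> * ST nu i (F \<sigma>) \<tau>)"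
proof -
  have "ST nu i (\<lambda>\<rho>. \<Sum>\<sigma>\<in>A. c \<sigma> * F \<sigma> \<rho>) \<tau> = (\<Sum>\<sigma>'\<in>SYT nu. \<Sum>\<sigma>\<in>A. Tcoef nu i \<sigma>' \<tau> * (c \<sigma> * F \<sigma> \<sigma>'))"
    by (simp add: ST_def sum_distrib_left)
  also have "\<dots> = (\<Sum>\<sigma>\<in>A. \<Sum>\<sigma>'\<in>SYT nu. Tcoef nu i \<sigma>' \<tau> * (c \<sigma> * F \<sigma> \<sigma>'))"
    by (rule sum.swap)
  also have "\<dots> = (\<Sum>\<sigma>\<in>A. c \<sigma> * ST nu i (F \<sigma>) \<tau>)"
    by (simp add: ST_def sum_distrib_left mult.left_commute)
  finally show ?thesis .
qed

lemma STinv_sum: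
  "STinv nu i (\<lambda>\<rho>. \<Sum>\<sigma>\<in>A. c \<sigma> * F \<sigma> \<rho>) \<tau> = (\<Sum>\<sigma>\<in>A. c \<sigma> * STinv nu i (F \<sigma>) \<tau>)"
  unfolding STinv_def ST_sum sum_lin3 ..

lemma foldr_STinv_sum:
  "foldr (STinv nu) l (\<lambda>\<rho>. \<Sum>\<sigma>\<in>A. c \<sigma> * F \<sigma> \<rho>) \<tau> = (\<Sum>\<sigma>\<in>A. c \<sigma> * foldr (STinv nu) l (F \<sigma>) \<tau>)"
proof (induct l arbitrary: \<tau>)
  case Nil thus ?case by simp
next
  case (Cons a l)
  have "foldr (STinv nu) l (\<lambda>\<rho>. \<Sum>\<sigma>\<in>A. c \<sigma> * F \<sigma> \<rho>) = (\<lambda>\<tau>. \<Sum>\<sigma>\<in>A. c \<sigma> * foldr (STinv nu) l (F \<sigma>) \<tau>)"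
    using Cons by (rule ext)
  thus ?case by (simp add: STinv_sum)
qed

lemma SYTsupp_sum:
  assumes "SYTsupp nu g"
  shows "g = (\<lambda>\<rho>. \<Sum>\<sigma>\<in>SYT nu. g \<sigma> * (if \<rho> = \<sigma> then 1 else 0))"
proof
  fix \<rho>
  show "g \<rho> = (\<Sum>\<sigma>\<in>SYT nu. g \<sigma> * (if \<rho> = \<sigma> then 1 else 0))"
  proof (cases "\<rho> \<in> SYT nu")
    case True
    have "(\<Sum>\<sigma>\<in>SYT nu. g \<sigma> * (if \<rho> = \<sigma> then 1 else 0)) = (\<Sum>\<sigma>\<in>SYT nu. if \<sigma> = \<rho> then g \<sigma> else 0)"
      by (rule sum.cong) auto
    also have "\<dots> = g \<rho>" using True finite_SYT by (simp add: sum.delta')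
    finally show ?thesis by simp
  next
    case False
    have "(\<Sum>\<sigma>\<in>SYT nu. g \<sigma> * (if \<rho> = \<sigma> then 1 else 0)) = 0"
      by (rule sum.neutral) (use False in auto)
    thus ?thesis using False assms by (simp add: SYTsupp_def)
  qed
qed

lemma Pbar_lin:
  assumes "SYTsupp nu g"
  shows "Pbar nu g \<tau> = (\<Sum>\<sigma>\<in>SYT nu. g \<sigma> * Pbar nu (\<lambda>\<rho>. if \<rho> = \<sigma> then 1 else 0) \<tau>)"
proof -
  have "Pbar nu g \<tau> = tt ^ (sum_list nu - 1) * foldr (STinv nu) [1..<sum_list nu]
      (\<lambda>\<rho>. \<Sum>\<sigma>\<in>SYT nu. g \<sigma> * (if \<rho> = \<sigma> then 1 else 0)) \<tau>"
    unfolding Pbar_def by (rule arg_cong[where f = "\<lambda>h. tt ^ (sum_list nu - 1) * foldr (STinv nu) [1..<sum_list nu] h \<tau>"]) (rule SYTsupp_sum[OF assms])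
  also have "\<dots> = (\<Sum>\<sigma>\<in>SYT nu. g \<sigma> * Pbar nu (\<lambda>\<rho>. if \<rho> = \<sigma> then 1 else 0) \<tau>)"
    unfolding foldr_STinv_sum Pbar_def by (simp add: sum_distrib_left algebra_simps)
  finally show ?thesis .
qed

lemma Vpi_Pbar:
  assumes "SYTsupp nu (\<lambda>\<sigma>. ppi (sum_list nu) (w \<sigma>) \<alpha>)"
  shows "Vpi nu w \<tau> \<alpha> = Pbar nu (\<lambda>\<sigma>. ppi (sum_list nu) (w \<sigma>) \<alpha>) \<tau>"
  unfolding Pbar_lin[OF assms] Vpi_def by (simp add: mult.commute)

lemma Pbar_STup: "sum_list nu = Suc k \<Longrightarrow> Pbar nu g = (\<lambda>\<tau>. tt ^ k * STup nu k g \<tau>)"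
  by (rule ext) (simp add: Pbar_def STup_def)

lemma STinv_smult: "STinv nu i (\<lambda>\<sigma>. c * g \<sigma>) \<tau> = c * STinv nu i g \<tau>"
  by (simp add: STinv_def ST_def sum_distrib_left algebra_simps)

lemma STdown_smult: "STdown nu k (\<lambda>\<sigma>. c * g \<sigma>) \<tau> = c * STdown nu k g \<tau>"
proof (induct k arbitrary: \<tau>)
  case 0 thus ?case by simp
next
  case (Suc k)
  have "STdown nu k (\<lambda>\<sigma>. c * g \<sigma>) = (\<lambda>\<tau>. c * STdown nu k g \<tau>)" using Suc by (rule ext)
  thus ?case by (simp add: STinv_smult)
qed

lemma STup_smult: "STup nu k (\<lambda>\<sigma>. c * g \<sigma>) \<tau> = c * STup nu k g \<tau>"
proof (induct k arbitrary: g \<tau>)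
  case 0 thus ?case by simp
next
  case (Suc k)
  have "STinv nu (Suc k) (\<lambda>\<sigma>. c * g \<sigma>) = (\<lambda>\<tau>. c * STinv nu (Suc k) g \<tau>)" by (rule ext) (rule STinv_smult)
  thus ?case by (simp add: STup_Suc Suc)
qed

lemma Pbar_supp: "sum_list nu = Suc k \<Longrightarrow> SYTsupp nu g \<Longrightarrow> SYTsupp nu (Pbar nu g)"
proof -
  assume m: "sum_list nu = Suc k" and g: "SYTsupp nu g"
  have "SYTsupp nu (STup nu k g)" using STup_supp[OF g] .
  thus ?thesis unfolding Pbar_STup[OF m] SYTsupp_def by simp
qed

definition Pm :: "nat \<Rightarrow> (nat \<Rightarrow> nat) \<Rightarrow> (nat \<Rightarrow> nat)" where
  "Pm m \<beta> = (\<lambda>j. if 1 \<le> j \<and> j < m then \<beta> (Suc j) else if j = m then \<beta> 1 else \<beta> j)"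

lemma ppi_Pm: "ppi m f \<beta> = qq ^ (\<beta> 1) * f (Pm m \<beta>)"
  by (simp add: ppi_def Pm_def)

lemma Pm_inj: "1 \<le> m \<Longrightarrow> inj (Pm m)"
proof (rule injI)
  fix x y assume m: "1 \<le> m" and e: "Pm m x = Pm m y"
  show "x = y"
  proof
    fix j
    show "x j = y j"
    proof (cases "j = 0")
      case True thus ?thesis using fun_cong[OF e, of 0] m by (simp add: Pm_def)
    next
      case False
      show ?thesis
      proof (cases "j = 1")
        case True thus ?thesis using fun_cong[OF e, of m] m by (simp add: Pm_def)
      next
        case j1: False
        show ?thesis
        proof (cases "j \<le> m")
          case True
          hence "1 \<le> j - 1 \<and> j - 1 < m" using False j1 by auto
          thus ?thesis using fun_cong[OF e, of "j - 1"] False j1 by (simp add: Pm_def)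
        next
          case False thus ?thesis using fun_cong[OF e, of j] m by (simp add: Pm_def)
        qed
      qed
    qed
  qed
qed

lemma fs_ppi: "1 \<le> m \<Longrightarrow> fs f \<Longrightarrow> fs (ppi m f)"
  unfolding fs_def
proof (rule finite_subset[of _ "Pm m -` {\<alpha>. f \<alpha> \<noteq> 0}"])
  show "{\<alpha>. ppi m f \<alpha> \<noteq> 0} \<subseteq> Pm m -` {\<alpha>. f \<alpha> \<noteq> 0}" by (auto simp: ppi_Pm)
  assume "1 \<le> m" "finite {\<alpha>. f \<alpha> \<noteq> 0}"
  thus "finite (Pm m -` {\<alpha>. f \<alpha> \<noteq> 0})" using finite_vimageI Pm_inj by blast
qed

lemma ppi_zero [simp]: "ppi m (\<lambda>_. 0) = (\<lambda>_. 0)" by (rule ext) (simp add: ppi_def)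

lemma Wv_Vpi:
  assumes w: "Wv nu v" and m: "sum_list nu = Suc k"
  shows "Wv nu (Vpi nu v)"
proof -
  have "fs (Vpi nu v \<tau>)" for \<tau>
  proof -
    have "fs (ppi (sum_list nu) (v \<sigma>))" for \<sigma> using fs_ppi[OF _ Wv_fs[OF w]] m by simp
    hence "fs (\<lambda>\<alpha>. Pbar nu (\<lambda>\<rho>. if \<rho> = \<sigma> then 1 else 0) \<tau> * ppi (sum_list nu) (v \<sigma>) \<alpha>)" for \<sigma>
      by (rule fs_scale)
    hence "fs (\<lambda>\<alpha>. \<Sum>\<sigma>\<in>SYT nu. Pbar nu (\<lambda>\<rho>. if \<rho> = \<sigma> then 1 else 0) \<tau> * ppi (sum_list nu) (v \<sigma>) \<alpha>)"
      by (rule fs_sum[OF finite_SYT])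
    thus ?thesis unfolding Vpi_def .
  qed
  moreover have "\<tau> \<notin> SYT nu \<Longrightarrow> Vpi nu v \<tau> = (\<lambda>_. 0)" for \<tau>
  proof -
    assume t: "\<tau> \<notin> SYT nu"
    have z: "Pbar nu (\<lambda>\<rho>. if \<rho> = \<sigma> then 1 else 0) \<tau> = 0" if s: "\<sigma> \<in> SYT nu" for \<sigma>
    proof -
      have "SYTsupp nu (\<lambda>\<rho>. if \<rho> = \<sigma> then 1 else 0)" using s by (simp add: SYTsupp_def)
      hence "SYTsupp nu (Pbar nu (\<lambda>\<rho>. if \<rho> = \<sigma> then 1 else 0))" by (rule Pbar_supp[OF m])
      thus ?thesis using t unfolding SYTsupp_def by blast
    qed
    show ?thesis
    proof
      fix \<alpha>
      show "Vpi nu v \<tau> \<alpha> = 0" unfolding Vpi_def by (rule sum.neutral) (simp add: z)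
    qed
  qed
  ultimately show ?thesis unfolding Wv_def by blast
qed

lemma Wv_foldr: "Wv nu v \<Longrightarrow> Wv nu (foldr (VT nu) l v)"
  by (induct l) (simp_all add: Wv_VT)

lemma Wv_scale: "Wv nu v \<Longrightarrow> Wv nu (\<lambda>\<tau> \<alpha>. c * v \<tau> \<alpha>)"
  using Wv_lin[of nu v v c 0] by simp

lemma Wv_Vtheta:
  assumes m: "sum_list nu = Suc k"
  shows "Wv nu v \<Longrightarrow> Wv nu (Vtheta nu j v)"
proof (induct j arbitrary: v rule: less_induct)
  case (less j)
  show ?case
  proof (cases j)
    case 0 thus ?thesis using less by simp
  next
    case (Suc j')
    show ?thesis
    proof (cases j')
      case 0
      have "Wv nu (Vpi nu (foldr (VT nu) (rev [1..<sum_list nu]) v))"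
        by (rule Wv_Vpi[OF Wv_foldr[OF less(2)] m])
      hence "Wv nu (\<lambda>\<tau> \<alpha>. (1 / tt ^ (sum_list nu - 1)) * Vpi nu (foldr (VT nu) (rev [1..<sum_list nu]) v) \<tau> \<alpha>)"
        by (rule Wv_scale)
      thus ?thesis using Suc 0 by simp
    next
      case (Suc i)
      have "Wv nu (Vtheta nu (Suc i) (VTinv nu (Suc i) v))"
        using less(1)[of "Suc i"] Wv_VTinv[OF less(2)] \<open>j = Suc j'\<close> Suc by simp
      hence "Wv nu (\<lambda>\<tau> \<alpha>. tt * VTinv nu (Suc i) (Vtheta nu (Suc i) (VTinv nu (Suc i) v)) \<tau> \<alpha>)"
        by (intro Wv_scale Wv_VTinv)
      thus ?thesis using \<open>j = Suc j'\<close> Suc by simp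
    qed
  qed
qed


definition qm :: "nat \<Rightarrow> nat list \<Rightarrow> svec \<Rightarrow> svec" where
  "qm n lam x = (\<lambda>\<sigma>. if \<sigma> \<in> SYT (shift_part n lam) then x (\<sigma>(Suc n := (1, Suc n - sum_list lam))) else 0)"

lemma Pm_sw: "1 \<le> n \<Longrightarrow> sw n (Pm (Suc n) \<alpha>) = Pm n \<alpha>"
  by (rule ext) (simp add: sw_def Pm_def)

lemma Pm_n: "1 \<le> n \<Longrightarrow> Pm (Suc n) \<alpha> n = \<alpha> (Suc n)" by (simp add: Pm_def)
lemma Pm_Sn: "Pm n \<alpha> (Suc n) = \<alpha> (Suc n)" by (simp add: Pm_def)

context shp
begin

lemma swap_ext: "Suc i \<le> n \<Longrightarrow> swap_tab i (ext \<rho>) = ext (swap_tab i \<rho>)"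
  by (rule ext) (simp add: swap_tab_def)

lemma content_ext: "k \<noteq> Suc n \<Longrightarrow> content (ext \<rho>) k = content \<rho> k"
  by (simp add: content_def)

lemma swap_out: "\<rho> \<in> SYT nu0 \<Longrightarrow> Suc i \<le> n \<Longrightarrow> swap_tab i \<rho> (Suc n) = (0, 0)"
  using SYT_out[of \<rho> nu0 "Suc n"] by (simp add: swap_tab_def)

lemma swap_SYT_iff:
  assumes r: "\<rho> \<in> SYT nu0" and i: "Suc i \<le> n"
  shows "ext (swap_tab i \<rho>) \<in> SYT nu1 \<longleftrightarrow> swap_tab i \<rho> \<in> SYT nu0"
proof
  assume h: "ext (swap_tab i \<rho>) \<in> SYT nu1"
  have "(ext (swap_tab i \<rho>))(Suc n := (0, 0)) \<in> SYT nu0" by (rule res_SYT[OF h]) simp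
  moreover have "(ext (swap_tab i \<rho>))(Suc n := (0, 0)) = swap_tab i \<rho>"
    using swap_out[OF r i] by (simp add: fun_eq_iff)
  ultimately show "swap_tab i \<rho> \<in> SYT nu0" by simp
next
  assume "swap_tab i \<rho> \<in> SYT nu0" thus "ext (swap_tab i \<rho>) \<in> SYT nu1" by (rule ext_SYT)
qed

lemma content_ext2:
  assumes "Suc i \<le> n"
  shows "content (ext \<rho>) i = content \<rho> i" "content (ext \<rho>) (Suc i) = content \<rho> (Suc i)"
  using assms by (simp_all add: content_def)

lemma Tc_ext_diag: "Suc i \<le> n \<Longrightarrow> Tcoef nu1 i (ext \<rho>) (ext \<rho>) = Tcoef nu0 i \<rho> \<rho>"
  unfolding Tc_diag by (simp only: content_ext2)

lemma Tc_ext_off: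
  assumes r: "\<rho> \<in> SYT nu0" and i: "1 \<le> i" "Suc i \<le> n"
  shows "Tcoef nu1 i (ext (swap_tab i \<rho>)) (ext \<rho>) = Tcoef nu0 i (swap_tab i \<rho>) \<rho>"
proof -
  have ne0: "swap_tab i \<rho> \<noteq> \<rho>" using swap_neq[OF r i(1)] i by simp
  have r1: "ext \<rho> \<in> SYT nu1" by (rule ext_SYT[OF r])
  have ne1: "swap_tab i (ext \<rho>) \<noteq> ext \<rho>" using swap_neq[OF r1 i(1)] i by simp
  show ?thesis using Tc_off[OF r1 ne1] Tc_off[OF r ne0]
    unfolding swap_ext[OF i(2)] content_ext2[OF i(2)] by simp
qed

lemma ST_q:
  assumes r: "\<rho> \<in> SYT nu0" and i: "1 \<le> i" "Suc i \<le> n"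
  shows "ST nu1 i x (ext \<rho>) = ST nu0 i (qm n lam x) \<rho>"
proof -
  have r1: "ext \<rho> \<in> SYT nu1" by (rule ext_SYT[OF r])
  have i1: "Suc i \<le> sum_list nu1" using i by simp
  have i0: "Suc i \<le> sum_list nu0" using i by simp
  have q1: "qm n lam x \<rho> = x (ext \<rho>)" using r by (simp add: qm_def)
  have q2: "swap_tab i \<rho> \<in> SYT nu0 \<Longrightarrow> qm n lam x (swap_tab i \<rho>) = x (ext (swap_tab i \<rho>))"
    by (simp add: qm_def)
  show ?thesis
    unfolding ST_pt[OF r1 i(1) i1] ST_pt[OF r i(1) i0] swap_ext[OF i(2)] swap_SYT_iff[OF r i(2)]
      Tc_ext_diag[OF i(2)] Tc_ext_off[OF r i] q1
    using q2 by simp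
qed

lemma qm_ST:
  assumes i: "1 \<le> i" "Suc i \<le> n"
  shows "qm n lam (ST nu1 i x) = ST nu0 i (qm n lam x)"
proof
  fix \<rho>
  show "qm n lam (ST nu1 i x) \<rho> = ST nu0 i (qm n lam x) \<rho>"
  proof (cases "\<rho> \<in> SYT nu0")
    case True thus ?thesis using ST_q[OF True i] by (simp add: qm_def)
  next
    case False thus ?thesis by (simp add: qm_def ST_out)
  qed
qed

lemma qm_STinv:
  assumes i: "1 \<le> i" "Suc i \<le> n"
  shows "qm n lam (STinv nu1 i x) = STinv nu0 i (qm n lam x)"
proof
  fix \<rho>
  have "qm n lam (STinv nu1 i x) \<rho> = (qm n lam (ST nu1 i x) \<rho> + (tt - 1) * qm n lam x \<rho>) / tt"
    by (simp add: qm_def STinv_def)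
  thus "qm n lam (STinv nu1 i x) \<rho> = STinv nu0 i (qm n lam x) \<rho>"
    unfolding qm_ST[OF i] by (simp add: STinv_def)
qed

lemma qm_STup: "k < n \<Longrightarrow> qm n lam (STup nu1 k x) = STup nu0 k (qm n lam x)"
proof (induct k arbitrary: x)
  case 0 thus ?case by simp
next
  case (Suc k)
  have "qm n lam (STup nu1 k (STinv nu1 (Suc k) x)) = STup nu0 k (qm n lam (STinv nu1 (Suc k) x))"
    using Suc by simp
  thus ?case using qm_STinv[of "Suc k" x] Suc(2) by (simp add: STup_Suc)
qed

lemma Phi_in: "\<rho> \<in> SYT nu0 \<Longrightarrow> Phi n lam v \<rho> = slice (Suc n) (v (ext \<rho>))"
  by (rule ext) (simp add: Phi_def slice_def)

lemma Phi_out: "\<rho> \<notin> SYT nu0 \<Longrightarrow> Phi n lam v \<rho> = (\<lambda>_. 0)"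
  by (rule ext) (simp add: Phi_def)

lemma Phi_good: "\<alpha> (Suc n) = 0 \<Longrightarrow> \<rho> \<in> SYT nu0 \<Longrightarrow> Phi n lam v \<rho> \<alpha> = v (ext \<rho>) \<alpha>"
  by (simp add: Phi_def)

lemma Phi_bad: "\<not> (\<alpha> (Suc n) = 0 \<and> \<rho> \<in> SYT nu0) \<Longrightarrow> Phi n lam v \<rho> \<alpha> = 0"
  unfolding Phi_def by meson

lemma Phi_qm: "\<beta> (Suc n) = 0 \<Longrightarrow> (\<lambda>\<sigma>. Phi n lam v \<sigma> \<beta>) = qm n lam (\<lambda>\<sigma>. v \<sigma> \<beta>)"
  by (rule ext) (simp add: Phi_def qm_def)

lemma thm1:
  assumes w: "Wv nu1 v" and i: "1 \<le> i" "Suc i \<le> n"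
  shows "Phi n lam (VT nu1 i v) = VT nu0 i (Phi n lam v)"
proof (intro ext)
  fix \<rho> \<alpha>
  have sn: "sw i \<alpha> (Suc n) = \<alpha> (Suc n)" using i by (simp add: sw_def)
  have ps: "pD i (slice (Suc n) (v (ext \<rho>))) = slice (Suc n) (pD i (v (ext \<rho>)))"
    by (rule pD_slice[OF Wv_fs[OF w]]) (use i in auto)
  show "Phi n lam (VT nu1 i v) \<rho> \<alpha> = VT nu0 i (Phi n lam v) \<rho> \<alpha>"
  proof (cases "\<alpha> (Suc n) = 0 \<and> \<rho> \<in> SYT nu0")
    case True
    hence a: "\<alpha> (Suc n) = 0" and r: "\<rho> \<in> SYT nu0" by auto
    have "pD i (Phi n lam v \<rho>) \<alpha> = pD i (v (ext \<rho>)) \<alpha>"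
      unfolding Phi_in[OF r] ps using a by (simp add: slice_def)
    moreover have "(\<lambda>\<sigma>. Phi n lam v \<sigma> (sw i \<alpha>)) = qm n lam (\<lambda>\<sigma>. v \<sigma> (sw i \<alpha>))"
      by (rule Phi_qm) (simp add: sn a)
    ultimately show ?thesis
      unfolding Phi_good[of \<alpha> \<rho>, OF a r] VT_ST ST_q[OF r i] by simp
  next
    case False
    have z1: "Phi n lam (VT nu1 i v) \<rho> \<alpha> = 0" by (rule Phi_bad[of \<alpha> \<rho>, OF False])
    have z2: "ST nu0 i (\<lambda>\<sigma>. Phi n lam v \<sigma> (sw i \<alpha>)) \<rho> = 0"
    proof (cases "\<rho> \<in> SYT nu0")
      case True
      hence "\<alpha> (Suc n) \<noteq> 0" using False by simp
      hence "(\<lambda>\<sigma>. Phi n lam v \<sigma> (sw i \<alpha>)) = (\<lambda>_. 0)" using sn by (simp add: Phi_def)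
      thus ?thesis by (simp add: ST_def)
    next
      case False thus ?thesis by (rule ST_out)
    qed
    have z3: "pD i (Phi n lam v \<rho>) \<alpha> = 0"
    proof (cases "\<rho> \<in> SYT nu0")
      case True
      hence "\<alpha> (Suc n) \<noteq> 0" using False by simp
      thus ?thesis unfolding Phi_in[OF True] ps by (simp add: slice_def)
    next
      case False thus ?thesis by (simp add: Phi_out)
    qed
    show ?thesis unfolding VT_ST z1 z2 z3 by simp
  qed
qed

lemma thm2: "j \<noteq> Suc n \<Longrightarrow> Phi n lam (VX j v) = VX j (Phi n lam v)"
  by (intro ext) (simp add: Phi_def VX_def pX_def)

lemma thm3: "Phi n lam (VX (Suc n) v) = (\<lambda>_ _. 0)"
  by (intro ext) (simp add: Phi_def VX_def pX_def)

end


lemma STup_zero: "STup nu k (\<lambda>_. 0) \<tau> = 0"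
  using STup_smult[of nu k 0 "\<lambda>_. 0" \<tau>] by simp

fun Vdown :: "nat list \<Rightarrow> nat \<Rightarrow> vec \<Rightarrow> vec" where
  "Vdown nu 0 u = u"
| "Vdown nu (Suc k) u = VTinv nu (Suc k) (Vdown nu k u)"

lemma Wv_Vdown: "Wv nu u \<Longrightarrow> Wv nu (Vdown nu k u)"
  by (induct k) (simp_all add: Wv_VTinv)

definition cyc :: "nat \<Rightarrow> (nat \<Rightarrow> nat) \<Rightarrow> (nat \<Rightarrow> nat)" where
  "cyc k \<alpha> = (\<lambda>j. if j = 1 then \<alpha> (Suc k) else if 2 \<le> j \<and> j \<le> Suc k then \<alpha> (j - 1) else \<alpha> j)"

lemma cyc_0: "cyc 0 \<alpha> = \<alpha>"
  by (rule ext) (simp add: cyc_def)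

lemma cyc_sw: "cyc k (sw (Suc k) \<alpha>) = cyc (Suc k) \<alpha>"
proof
  fix j
  show "cyc k (sw (Suc k) \<alpha>) j = cyc (Suc k) \<alpha> j"
    unfolding cyc_def sw_def by auto
qed

lemma Pm_cyc: "Pm (Suc n) (cyc n \<alpha>) = \<alpha>"
proof
  fix j
  show "Pm (Suc n) (cyc n \<alpha>) j = \<alpha> j"
    by (cases "j = 0"; cases "j = Suc n"; simp add: cyc_def Pm_def)
qed

lemma cyc_1: "cyc n \<alpha> 1 = \<alpha> (Suc n)" by (simp add: cyc_def)

lemma Phi_lin: "Phi n lam (\<lambda>\<tau> \<alpha>. c * x \<tau> \<alpha> + d * y \<tau> \<alpha>) = (\<lambda>\<tau> \<alpha>. c * Phi n lam x \<tau> \<alpha> + d * Phi n lam y \<tau> \<alpha>)"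
  by (intro ext) (simp add: Phi_def)

lemma Phi_scale: "Phi n lam (\<lambda>\<tau> \<alpha>. c * x \<tau> \<alpha>) = (\<lambda>\<tau> \<alpha>. c * Phi n lam x \<tau> \<alpha>)"
  by (intro ext) (simp add: Phi_def)

context shp
begin

lemma good1': "gnu nu1" using good1 by unfold_locales

lemma thm4:
  assumes w: "Wv nu1 v" and n1: "1 \<le> n"
  shows "Phi n lam (\<lambda>\<tau> \<alpha>. Vpi nu1 (VT nu1 n v) \<tau> \<alpha> / tt ^ n) = (\<lambda>\<tau> \<alpha>. Vpi nu0 (Phi n lam v) \<tau> \<alpha> / tt ^ (n - 1))"
proof (intro ext)
  fix \<rho> :: tab and \<alpha> :: "nat \<Rightarrow> nat"
  let ?c = "qq ^ (\<alpha> 1)"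
  let ?w = "\<lambda>\<sigma>'. v \<sigma>' (Pm n \<alpha>)"
  have m0: "sum_list nu0 = Suc (n - 1)" using n1 by simp
  have m1: "sum_list nu1 = Suc n" by simp
  have s0: "SYTsupp nu0 (\<lambda>\<sigma>. ppi (sum_list nu0) (Phi n lam v \<sigma>) \<alpha>)"
    unfolding SYTsupp_def by (simp add: Phi_out)
  have V0: "Vpi nu0 (Phi n lam v) \<rho> \<alpha> = Pbar nu0 (\<lambda>\<sigma>. ?c * Phi n lam v \<sigma> (Pm n \<alpha>)) \<rho>"
    unfolding Vpi_Pbar[OF s0] by (simp add: ppi_Pm)
  show "Phi n lam (\<lambda>\<tau> \<alpha>. Vpi nu1 (VT nu1 n v) \<tau> \<alpha> / tt ^ n) \<rho> \<alpha> = Vpi nu0 (Phi n lam v) \<rho> \<alpha> / tt ^ (n - 1)"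
  proof (cases "\<alpha> (Suc n) = 0 \<and> \<rho> \<in> SYT nu0")
    case True
    hence a: "\<alpha> (Suc n) = 0" and r: "\<rho> \<in> SYT nu0" by auto
    have wv: "Wv nu1 (VT nu1 n v)" by (rule Wv_VT[OF w])
    have s1: "SYTsupp nu1 (\<lambda>\<sigma>. ppi (sum_list nu1) (VT nu1 n v \<sigma>) \<alpha>)"
      unfolding SYTsupp_def using wv by (simp add: Wv_def)
    have e1: "ppi (Suc n) (VT nu1 n v \<sigma>) \<alpha> = ?c * ST nu1 n ?w \<sigma>" for \<sigma>
    proof -
      have "pD n (v \<sigma>) (Pm (Suc n) \<alpha>) = 0" by (rule pD_local0) (simp add: Pm_n[OF n1] a)
      thus ?thesis by (simp add: ppi_Pm VT_ST Pm_sw[OF n1])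
    qed
    have wsupp: "SYTsupp nu1 ?w" by (rule Wv_supp[OF w])
    have "Vpi nu1 (VT nu1 n v) (ext \<rho>) \<alpha> = Pbar nu1 (\<lambda>\<sigma>. ?c * ST nu1 n ?w \<sigma>) (ext \<rho>)"
      unfolding Vpi_Pbar[OF s1] m1 e1 ..
    also have "\<dots> = tt ^ n * (?c * STup nu1 n (ST nu1 n ?w) (ext \<rho>))"
      unfolding Pbar_STup[OF m1] STup_smult ..
    also have "STup nu1 n (ST nu1 n ?w) = STup nu1 (n - 1) ?w"
    proof -
      have nn: "n = Suc (n - 1)" using n1 by simp
      have "STup nu1 n (ST nu1 n ?w) = STup nu1 (n - 1) (STinv nu1 n (ST nu1 n ?w))"
        using STup_Suc[of nu1 "n - 1" "ST nu1 n ?w"] n1 by simp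
      also have "STinv nu1 n (ST nu1 n ?w) = ?w"
        by (rule gnu.STinv_ST[OF good1' wsupp n1]) simp
      finally show ?thesis .
    qed
    finally have L: "Vpi nu1 (VT nu1 n v) (ext \<rho>) \<alpha> = tt ^ n * (?c * STup nu1 (n - 1) ?w (ext \<rho>))" .
    have e0: "(\<lambda>\<sigma>. Phi n lam v \<sigma> (Pm n \<alpha>)) = qm n lam ?w"
      by (rule Phi_qm) (simp add: Pm_Sn a)
    have "Vpi nu0 (Phi n lam v) \<rho> \<alpha> = tt ^ (n - 1) * (?c * STup nu0 (n - 1) (qm n lam ?w) \<rho>)"
      unfolding V0 Pbar_STup[OF m0] STup_smult e0 ..
    also have "STup nu0 (n - 1) (qm n lam ?w) \<rho> = STup nu1 (n - 1) ?w (ext \<rho>)"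
    proof -
      have qq: "qm n lam (STup nu1 (n - 1) ?w) = STup nu0 (n - 1) (qm n lam ?w)"
        by (rule qm_STup) (use n1 in simp)
      have "STup nu0 (n - 1) (qm n lam ?w) \<rho> = qm n lam (STup nu1 (n - 1) ?w) \<rho>" by (simp only: qq)
      also have "\<dots> = STup nu1 (n - 1) ?w (ext \<rho>)" using r by (simp add: qm_def)
      finally show ?thesis .
    qed
    finally have R: "Vpi nu0 (Phi n lam v) \<rho> \<alpha> = tt ^ (n - 1) * (?c * STup nu1 (n - 1) ?w (ext \<rho>))" .
    show ?thesis
      using L R by (simp add: Phi_good[of \<alpha> \<rho>, OF a r])
  next
    case False
    have z1: "Phi n lam (\<lambda>\<tau> \<alpha>. Vpi nu1 (VT nu1 n v) \<tau> \<alpha> / tt ^ n) \<rho> \<alpha> = 0"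
      by (rule Phi_bad[of \<alpha> \<rho>, OF False])
    have z2: "Vpi nu0 (Phi n lam v) \<rho> \<alpha> = 0"
    proof (cases "\<rho> \<in> SYT nu0")
      case True
      hence "\<alpha> (Suc n) \<noteq> 0" using False by simp
      hence "(\<lambda>\<sigma>. ?c * Phi n lam v \<sigma> (Pm n \<alpha>)) = (\<lambda>_. 0)" by (simp add: Phi_def Pm_Sn fun_eq_iff)
      thus ?thesis unfolding V0 Pbar_STup[OF m0] by (simp add: STup_zero)
    next
      case False
      have "SYTsupp nu0 (\<lambda>\<sigma>. ?c * Phi n lam v \<sigma> (Pm n \<alpha>))" unfolding SYTsupp_def by (simp add: Phi_out)
      hence "SYTsupp nu0 (Pbar nu0 (\<lambda>\<sigma>. ?c * Phi n lam v \<sigma> (Pm n \<alpha>)))" by (rule Pbar_supp[OF m0])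
      thus ?thesis unfolding V0 using False by (simp add: SYTsupp_def)
    qed
    show ?thesis unfolding z1 z2 by simp
  qed
qed

end


context shp
begin

lemma Phi_VTinv:
  assumes w: "Wv nu1 v" and i: "1 \<le> i" "Suc i \<le> n"
  shows "Phi n lam (VTinv nu1 i v) = VTinv nu0 i (Phi n lam v)"
  unfolding VTinv_alt Phi_lin thm1[OF w i] ..

lemma Phi_foldr:
  assumes w: "Wv nu1 v"
  shows "(\<forall>i\<in>set l. 1 \<le> i \<and> Suc i \<le> n) \<Longrightarrow> Phi n lam (foldr (VT nu1) l v) = foldr (VT nu0) l (Phi n lam v)"
proof (induct l)
  case Nil thus ?case by simp
next
  case (Cons a l)
  have "Phi n lam (VT nu1 a (foldr (VT nu1) l v)) = VT nu0 a (Phi n lam (foldr (VT nu1) l v))"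
    by (rule thm1[OF Wv_foldr[OF w]]) (use Cons(2) in auto)
  thus ?case using Cons by simp
qed

lemma thm5:
  shows "Wv nu1 v \<Longrightarrow> 1 \<le> i \<Longrightarrow> i \<le> n \<Longrightarrow> Phi n lam (Vtheta nu1 i v) = Vtheta nu0 i (Phi n lam v)"
proof (induct i arbitrary: v rule: less_induct)
  case (less i)
  have w: "Wv nu1 v" by fact
  show ?case
  proof (cases i)
    case 0 thus ?thesis using less by simp
  next
    case (Suc j)
    show ?thesis
    proof (cases j)
      case 0
      have n1: "1 \<le> n" using less Suc 0 by simp
      have ev: "rev [1..<Suc n] = n # rev [1..<n]" using n1 by (simp add: upt_Suc_append)
      let ?W = "foldr (VT nu1) (rev [1..<n]) v"
      have pw: "Phi n lam ?W = foldr (VT nu0) (rev [1..<n]) (Phi n lam v)"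
        by (rule Phi_foldr[OF w]) auto
      have t1: "Vtheta nu1 (Suc 0) v = (\<lambda>\<tau> \<alpha>. Vpi nu1 (foldr (VT nu1) (rev [1..<Suc n]) v) \<tau> \<alpha> / tt ^ n)"
        by (simp only: Vtheta.simps sum1 diff_Suc_1)
      have t0: "Vtheta nu0 (Suc 0) (Phi n lam v) = (\<lambda>\<tau> \<alpha>. Vpi nu0 (foldr (VT nu0) (rev [1..<n]) (Phi n lam v)) \<tau> \<alpha> / tt ^ (n - 1))"
        by (simp only: Vtheta.simps sum0)
      have "Phi n lam (Vtheta nu1 (Suc 0) v) = Phi n lam (\<lambda>\<tau> \<alpha>. Vpi nu1 (VT nu1 n ?W) \<tau> \<alpha> / tt ^ n)"
        unfolding t1 ev foldr_Cons o_apply ..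
      also have "\<dots> = (\<lambda>\<tau> \<alpha>. Vpi nu0 (Phi n lam ?W) \<tau> \<alpha> / tt ^ (n - 1))"
        by (rule thm4[OF Wv_foldr[OF w] n1])
      also have "\<dots> = Vtheta nu0 (Suc 0) (Phi n lam v)" unfolding t0 pw ..
      finally show ?thesis using Suc 0 by simp
    next
      case (Suc k)
      have ij: "i = Suc (Suc k)" using \<open>i = Suc j\<close> Suc by simp
      have kn: "Suc (Suc k) \<le> n" using less(4) ij by simp
      let ?v' = "VTinv nu1 (Suc k) v"
      have w': "Wv nu1 ?v'" by (rule Wv_VTinv[OF w])
      have Y: "Wv nu1 (Vtheta nu1 (Suc k) ?v')" by (rule Wv_Vtheta[OF _ w']) simp
      have IH: "Phi n lam (Vtheta nu1 (Suc k) ?v') = Vtheta nu0 (Suc k) (Phi n lam ?v')"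
        by (rule less(1)[OF _ w']) (use ij kn in simp_all)
      have p1: "Phi n lam (VTinv nu1 (Suc k) (Vtheta nu1 (Suc k) ?v')) = VTinv nu0 (Suc k) (Phi n lam (Vtheta nu1 (Suc k) ?v'))"
        by (rule Phi_VTinv[OF Y]) (use kn in simp_all)
      have p2: "Phi n lam ?v' = VTinv nu0 (Suc k) (Phi n lam v)"
        by (rule Phi_VTinv[OF w]) (use kn in simp_all)
      have "Phi n lam (Vtheta nu1 i v) = Phi n lam (\<lambda>\<tau> \<alpha>. tt * VTinv nu1 (Suc k) (Vtheta nu1 (Suc k) ?v') \<tau> \<alpha>)"
        using ij by simp
      also have "\<dots> = (\<lambda>\<tau> \<alpha>. tt * VTinv nu0 (Suc k) (Phi n lam (Vtheta nu1 (Suc k) ?v')) \<tau> \<alpha>)"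
        unfolding Phi_scale p1 ..
      also have "\<dots> = Vtheta nu0 i (Phi n lam v)"
        unfolding IH p2 using ij by simp
      finally show ?thesis .
    qed
  qed
qed

lemma theta_formula:
  shows "Wv nu1 v \<Longrightarrow> k \<le> n \<Longrightarrow>
    Vtheta nu1 (Suc k) v = (\<lambda>\<tau> \<alpha>. Vdown nu1 k (Vpi nu1 (foldr (VT nu1) (rev [Suc k..<Suc n]) v)) \<tau> \<alpha> / tt ^ (n - k))"
proof (induct k arbitrary: v)
  case 0 thus ?case by simp
next
  case (Suc k)
  have w: "Wv nu1 v" by fact
  let ?v' = "VTinv nu1 (Suc k) v"
  have w': "Wv nu1 ?v'" by (rule Wv_VTinv[OF w])
  have IH: "Vtheta nu1 (Suc k) ?v' = (\<lambda>\<tau> \<alpha>. Vdown nu1 k (Vpi nu1 (foldr (VT nu1) (rev [Suc k..<Suc n]) ?v')) \<tau> \<alpha> / tt ^ (n - k))"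
    by (rule Suc(1)[OF w']) (use Suc(3) in simp)
  have up: "rev [Suc k..<Suc n] = rev [Suc (Suc k)..<Suc n] @ [Suc k]"
    using Suc(3) by (simp add: upt_conv_Cons)
  have "foldr (VT nu1) (rev [Suc k..<Suc n]) ?v' = foldr (VT nu1) (rev [Suc (Suc k)..<Suc n]) (VT nu1 (Suc k) ?v')"
    unfolding up by simp
  also have "VT nu1 (Suc k) ?v' = v"
    by (rule VT_VTinv[OF w good1]) (use Suc(3) in simp_all)
  finally have fe: "foldr (VT nu1) (rev [Suc k..<Suc n]) ?v' = foldr (VT nu1) (rev [Suc (Suc k)..<Suc n]) v" .
  let ?X = "Vdown nu1 k (Vpi nu1 (foldr (VT nu1) (rev [Suc (Suc k)..<Suc n]) v))"
  have X: "Wv nu1 ?X" by (intro Wv_Vdown Wv_Vpi Wv_foldr w) simp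
  have sc: "(\<lambda>\<tau> \<alpha>. ?X \<tau> \<alpha> / tt ^ (n - k)) = (\<lambda>\<tau> \<alpha>. (1 / tt ^ (n - k)) * ?X \<tau> \<alpha> + 0 * ?X \<tau> \<alpha>)"
    by simp
  have nk0: "n - k = Suc (n - Suc k)" using Suc(3) by simp
  have nk: "tt ^ (n - k) = tt * tt ^ (n - Suc k)" unfolding nk0 by simp
  show ?case
    unfolding Vtheta.simps IH fe sc VTinv_lin[OF X X] using nk by (simp add: fun_eq_iff)
qed

lemma ev_claim:
  shows "Wv nu1 u \<Longrightarrow> k \<le> n \<Longrightarrow> \<alpha> (Suc k) = 0 \<Longrightarrow>
    Vdown nu1 k u \<tau> \<alpha> = STdown nu1 k (\<lambda>\<sigma>. u \<sigma> (cyc k \<alpha>)) \<tau>"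
proof (induct k arbitrary: \<alpha> \<tau>)
  case 0 thus ?case by (simp add: cyc_0)
next
  case (Suc k)
  let ?X = "Vdown nu1 k u"
  have X: "Wv nu1 ?X" by (rule Wv_Vdown[OF Suc(2)])
  have a: "\<alpha> (Suc (Suc k)) = 0" by fact
  have swa: "sw (Suc k) \<alpha> (Suc k) = 0" using a by simp
  have IH: "(\<lambda>\<sigma>. ?X \<sigma> (sw (Suc k) \<alpha>)) = STdown nu1 k (\<lambda>\<sigma>. u \<sigma> (cyc (Suc k) \<alpha>))"
  proof
    fix \<sigma>
    show "?X \<sigma> (sw (Suc k) \<alpha>) = STdown nu1 k (\<lambda>\<sigma>. u \<sigma> (cyc (Suc k) \<alpha>)) \<sigma>"
      using Suc(1)[of "sw (Suc k) \<alpha>" \<sigma>, OF Suc(2) _ swa] Suc(3) by (simp add: cyc_sw)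
  qed
  have pd: "pD (Suc k) (?X \<tau>) \<alpha> = ?X \<tau> (sw (Suc k) \<alpha>) - ?X \<tau> \<alpha>"
    using pD_local1[where f = "?X \<tau>" and i = "Suc k" and \<alpha> = \<alpha>, OF Wv_fs[OF X] a] by (simp add: psw_sw)
  have "Vdown nu1 (Suc k) u \<tau> \<alpha> = (VT nu1 (Suc k) ?X \<tau> \<alpha> + (tt - 1) * ?X \<tau> \<alpha>) / tt"
    by (simp add: VTinv_def)
  also have "\<dots> = (ST nu1 (Suc k) (\<lambda>\<sigma>. ?X \<sigma> (sw (Suc k) \<alpha>)) \<tau> + (tt - 1) * ?X \<tau> (sw (Suc k) \<alpha>)) / tt"
    unfolding VT_ST pd by (simp add: algebra_simps)
  also have "\<dots> = STinv nu1 (Suc k) (\<lambda>\<sigma>. ?X \<sigma> (sw (Suc k) \<alpha>)) \<tau>" by (simp add: STinv_def)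
  also have "\<dots> = STdown nu1 (Suc k) (\<lambda>\<sigma>. u \<sigma> (cyc (Suc k) \<alpha>)) \<tau>" unfolding IH by simp
  finally show ?case .
qed

lemma thm6:
  assumes w: "Wv nu1 v"
  shows "Phi n lam (\<lambda>\<tau> \<alpha>. Vtheta nu1 (Suc n) v \<tau> \<alpha> - tt ^ (n - sum_list lam) * v \<tau> \<alpha>) = (\<lambda>_ _. 0)"
proof (intro ext)
  fix \<rho> :: tab and \<alpha> :: "nat \<Rightarrow> nat"
  show "Phi n lam (\<lambda>\<tau> \<alpha>. Vtheta nu1 (Suc n) v \<tau> \<alpha> - tt ^ (n - sum_list lam) * v \<tau> \<alpha>) \<rho> \<alpha> = 0"
  proof (cases "\<alpha> (Suc n) = 0 \<and> \<rho> \<in> SYT nu0")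
    case False thus ?thesis by (rule Phi_bad[of \<alpha> \<rho>])
  next
    case True
    hence a: "\<alpha> (Suc n) = 0" and r: "\<rho> \<in> SYT nu0" by auto
    have r1: "ext \<rho> \<in> SYT nu1" by (rule ext_SYT[OF r])
    let ?g = "\<lambda>\<sigma>'. v \<sigma>' \<alpha>"
    have gs: "SYTsupp nu1 ?g" by (rule Wv_supp[OF w])
    have th: "Vtheta nu1 (Suc n) v = Vdown nu1 n (Vpi nu1 v)"
      using theta_formula[OF w, of n] by simp
    have ev: "Vdown nu1 n (Vpi nu1 v) (ext \<rho>) \<alpha> = STdown nu1 n (\<lambda>\<sigma>. Vpi nu1 v \<sigma> (cyc n \<alpha>)) (ext \<rho>)"
      by (rule ev_claim[of "Vpi nu1 v" n \<alpha> "ext \<rho>", OF Wv_Vpi[OF w sum1] _ a]) simp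
    have s1: "SYTsupp nu1 (\<lambda>\<sigma>. ppi (sum_list nu1) (v \<sigma>) (cyc n \<alpha>))"
      unfolding SYTsupp_def using w by (simp add: Wv_def)
    have pv: "(\<lambda>\<sigma>. Vpi nu1 v \<sigma> (cyc n \<alpha>)) = (\<lambda>\<sigma>. tt ^ n * STup nu1 n ?g \<sigma>)"
    proof
      fix \<sigma>
      have "Vpi nu1 v \<sigma> (cyc n \<alpha>) = Pbar nu1 (\<lambda>\<sigma>'. ppi (sum_list nu1) (v \<sigma>') (cyc n \<alpha>)) \<sigma>"
        by (rule Vpi_Pbar[OF s1])
      also have "(\<lambda>\<sigma>'. ppi (sum_list nu1) (v \<sigma>') (cyc n \<alpha>)) = ?g"
        unfolding sum1 ppi_Pm Pm_cyc by (simp add: cyc_def a)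
      finally show "Vpi nu1 v \<sigma> (cyc n \<alpha>) = tt ^ n * STup nu1 n ?g \<sigma>"
        by (simp add: Pbar_STup)
    qed
    have "Vtheta nu1 (Suc n) v (ext \<rho>) \<alpha> = tt ^ n * STdown nu1 n (STup nu1 n ?g) (ext \<rho>)"
      unfolding th ev pv STdown_smult ..
    also have "\<dots> = tpow (content (ext \<rho>) (Suc n)) * v (ext \<rho>) \<alpha>"
      by (rule gnu.theta_diag[OF good1' gs _ r1]) simp
    also have "\<dots> = tt ^ (n - sum_list lam) * v (ext \<rho>) \<alpha>"
      unfolding content_box0 by (simp add: tpow_def)
    finally show ?thesis by (simp add: Phi_good[of \<alpha> \<rho>, OF a r])
  qed
qed

end

theorem mainTheorem12:
  fixes lam :: "nat list" and n :: nat
  assumes "is_partition lam"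
    and "sum_list lam + lam1 lam \<le> n"
  shows "\<forall>v \<in> Vspace (shift_part (Suc n) lam).
     (\<forall>i. 1 \<le> i \<and> i \<le> n - 1 \<longrightarrow>
        Phi n lam (VT (shift_part (Suc n) lam) i v) = VT (shift_part n lam) i (Phi n lam v))
   \<and> (\<forall>i. 1 \<le> i \<and> i \<le> n \<longrightarrow> Phi n lam (VX i v) = VX i (Phi n lam v))
   \<and> Phi n lam (VX (Suc n) v) = (\<lambda>_ _. 0)
   \<and> (1 \<le> n \<longrightarrow>
        Phi n lam (\<lambda>\<tau> \<alpha>. Vpi (shift_part (Suc n) lam) (VT (shift_part (Suc n) lam) n v) \<tau> \<alpha> / tt ^ n)
        = (\<lambda>\<tau> \<alpha>. Vpi (shift_part n lam) (Phi n lam v) \<tau> \<alpha> / tt ^ (n - 1)))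
   \<and> (\<forall>i. 1 \<le> i \<and> i \<le> n \<longrightarrow>
        Phi n lam (Vtheta (shift_part (Suc n) lam) i v) = Vtheta (shift_part n lam) i (Phi n lam v))
   \<and> Phi n lam (\<lambda>\<tau> \<alpha>. Vtheta (shift_part (Suc n) lam) (Suc n) v \<tau> \<alpha>
                        - tt ^ (n - sum_list lam) * v \<tau> \<alpha>) = (\<lambda>_ _. 0)"
proof
  fix v assume v: "v \<in> Vspace (shift_part (Suc n) lam)"
  interpret shp lam n using assms by unfold_locales
  have w: "Wv nu1 v" by (rule Vspace_Wv[OF v])
  show "(\<forall>i. 1 \<le> i \<and> i \<le> n - 1 \<longrightarrow>
        Phi n lam (VT (shift_part (Suc n) lam) i v) = VT (shift_part n lam) i (Phi n lam v))
   \<and> (\<forall>i. 1 \<le> i \<and> i \<le> n \<longrightarrow> Phi n lam (VX i v) = VX i (Phi n lam v))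
   \<and> Phi n lam (VX (Suc n) v) = (\<lambda>_ _. 0)
   \<and> (1 \<le> n \<longrightarrow>
        Phi n lam (\<lambda>\<tau> \<alpha>. Vpi (shift_part (Suc n) lam) (VT (shift_part (Suc n) lam) n v) \<tau> \<alpha> / tt ^ n)
        = (\<lambda>\<tau> \<alpha>. Vpi (shift_part n lam) (Phi n lam v) \<tau> \<alpha> / tt ^ (n - 1)))
   \<and> (\<forall>i. 1 \<le> i \<and> i \<le> n \<longrightarrow>
        Phi n lam (Vtheta (shift_part (Suc n) lam) i v) = Vtheta (shift_part n lam) i (Phi n lam v))
   \<and> Phi n lam (\<lambda>\<tau> \<alpha>. Vtheta (shift_part (Suc n) lam) (Suc n) v \<tau> \<alpha>
                        - tt ^ (n - sum_list lam) * v \<tau> \<alpha>) = (\<lambda>_ _. 0)"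
  proof (intro conjI allI impI)
    fix i assume "1 \<le> i \<and> i \<le> n - 1"
    thus "Phi n lam (VT nu1 i v) = VT nu0 i (Phi n lam v)" by (intro thm1[OF w]) auto
  next
    fix i assume "1 \<le> i \<and> i \<le> n"
    thus "Phi n lam (VX i v) = VX i (Phi n lam v)" by (intro thm2) auto
  next
    show "Phi n lam (VX (Suc n) v) = (\<lambda>_ _. 0)" by (rule thm3)
  next
    assume "1 \<le> n"
    thus "Phi n lam (\<lambda>\<tau> \<alpha>. Vpi nu1 (VT nu1 n v) \<tau> \<alpha> / tt ^ n) = (\<lambda>\<tau> \<alpha>. Vpi nu0 (Phi n lam v) \<tau> \<alpha> / tt ^ (n - 1))"
      by (rule thm4[OF w])
  next
    fix i assume "1 \<le> i \<and> i \<le> n"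
    thus "Phi n lam (Vtheta nu1 i v) = Vtheta nu0 i (Phi n lam v)" by (intro thm5[OF w]) auto
  next
    show "Phi n lam (\<lambda>\<tau> \<alpha>. Vtheta nu1 (Suc n) v \<tau> \<alpha> - tt ^ (n - sum_list lam) * v \<tau> \<alpha>) = (\<lambda>_ _. 0)"
      by (rule thm6[OF w])
  qed
qed


end
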